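(* Let $d_1,d_2,a,b,e,\rho,h_0>0$, let $J_1,J_2$ satisfy (J), $W$ satisfy (W), $G$ satisfy (G1)–(G2), $(u_0,v_0)$ satisfy (IC), and for $\mu>0$ let $(u^\mu,v^\mu,g^\mu,h^\mu)$ denote the solution of problem (P) with parameter $\mu$. If $0<\mu_1\le\mu_2$, then $h^{\mu_1}(t)\le h^{\mu_2}(t)$, $g^{\mu_1}(t)\ge g^{\mu_2}(t)$, $u^{\mu_1}(t,x)\le u^{\mu_2}(t,x)$ and $v^{\mu_1}(t,x)\le v^{\mu_2}(t,x)$ for $t>0$ and $x\in(g^{\mu_1}(t),h^{\mu_1}(t))$.
   Context: Condition (J) on $J_i$ ($i=1,2$): $J_i\in C(\mathbb{R})\cap L^\infty(\mathbb{R})$, $J_i(x)=J_i(-x)\ge 0$, $J_i(0)>0$, $\int_{\mathbb{R}}J_i=1$. $W_{J_1}(x):=\int_x^{\infty}J_1(y)\,dy$. (W): $W\in L^\infty([0,\infty))$ nonnegative, locally Lipschitz on $[0,\infty)$, $W(0)>0$. (G1): $G\in C^1([0,\infty))$, $G(0)=0$, $G'>0$. (G2): $(G(z)/z)'<0$ for $z>0$, $\lim_{z\to\infty}G(z)/z<ab/e$. (IC): $u_0,v_0\in C([-h_0,h_0])$, vanishing at $\pm h_0$, positive in $(-h_0,h_0)$. Problem (P): for $t>0$, $x\in(g(t),h(t))$: $u_t=d_1\int_{g(t)}^{h(t)}J_1(x-y)u(t,y)dy-d_1u-au+ev$, $v_t=d_2\int_{g(t)}^{h(t)}J_2(x-y)v(t,y)dy-d_2v-bv+G(u)$;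 $u=v=0$ at $x=g(t),h(t)$; $h'(t)=\mu\int_{g(t)}^{h(t)}[uW_{J_1}(h(t)-x)+\rho vW(h(t)-x)]dx$; $g'(t)=-\mu\int_{g(t)}^{h(t)}[uW_{J_1}(x-g(t))+\rho vW(x-g(t))]dx$; $h(0)=-g(0)=h_0$, $(u,v)(0,\cdot)=(u_0,v_0)$. It has a unique global solution. *)

theory Defs
  imports "HOL-Analysis.Analysis"
begin

definition cond_J :: "(real \<Rightarrow> real) \<Rightarrow> bool" where
  "cond_J J \<longleftrightarrow> continuous_on UNIV J \<and> bounded (range J) \<and>
     (\<forall>x. J x = J (- x) \<and> J x \<ge> 0) \<and> J 0 > 0 \<and> (J has_integral 1) UNIV"

definition W_J :: "(real \<Rightarrow> real) \<Rightarrow> real \<Rightarrow> real" where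
  "W_J J x = integral {x..} J"

definition cond_W :: "(real \<Rightarrow> real) \<Rightarrow> bool" where
  "cond_W W \<longleftrightarrow> bounded (W ` {0..}) \<and> (\<forall>x\<ge>0. W x \<ge> 0) \<and>
     (\<forall>R\<ge>0. \<exists>L. L-lipschitz_on {0..R} W) \<and> W 0 > 0"

definition cond_G1 :: "(real \<Rightarrow> real) \<Rightarrow> bool" where
  "cond_G1 G \<longleftrightarrow> (\<exists>G'. (\<forall>z\<ge>0. (G has_real_derivative G' z) (at z within {0..})) \<and>
      continuous_on {0..} G' \<and> (\<forall>z\<ge>0. G' z > 0)) \<and> G 0 = 0"

definition cond_G2 :: "real \<Rightarrow> real \<Rightarrow> real \<Rightarrow> (real \<Rightarrow> real) \<Rightarrow> bool" where
  "cond_G2 a b e G \<longleftrightarrow> (\<forall>z>0. deriv (\<lambda>s. G s / s) z < 0) \<and>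
     (\<exists>L. ((\<lambda>z. G z / z) \<longlongrightarrow> L) at_top \<and> L < a * b / e)"

definition cond_IC :: "real \<Rightarrow> (real \<Rightarrow> real) \<Rightarrow> (real \<Rightarrow> real) \<Rightarrow> bool" where
  "cond_IC h0 u0 v0 \<longleftrightarrow> continuous_on {-h0..h0} u0 \<and> continuous_on {-h0..h0} v0 \<and>
     u0 (-h0) = 0 \<and> u0 h0 = 0 \<and> v0 (-h0) = 0 \<and> v0 h0 = 0 \<and>
     (\<forall>x. -h0 < x \<and> x < h0 \<longrightarrow> u0 x > 0 \<and> v0 x > 0)"

text \<open>(u,v,g,h) is a (classical, global) solution of problem (P) with parameter mu.
  u t x, v t x are the densities at time t and position x; only their values on
  the closed region {(t,x). t \<ge> 0, g t \<le> x \<le> h t} are relevant.\<close>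
definition sol_P ::
  "real \<Rightarrow> real \<Rightarrow> real \<Rightarrow> real \<Rightarrow> real \<Rightarrow> real \<Rightarrow> real \<Rightarrow>
   (real \<Rightarrow> real) \<Rightarrow> (real \<Rightarrow> real) \<Rightarrow> (real \<Rightarrow> real) \<Rightarrow> (real \<Rightarrow> real) \<Rightarrow>
   real \<Rightarrow> (real \<Rightarrow> real) \<Rightarrow> (real \<Rightarrow> real) \<Rightarrow>
   (real \<Rightarrow> real \<Rightarrow> real) \<Rightarrow> (real \<Rightarrow> real \<Rightarrow> real) \<Rightarrow> (real \<Rightarrow> real) \<Rightarrow> (real \<Rightarrow> real) \<Rightarrow> bool"
where
  "sol_P d1 d2 a b e \<rho> \<mu> J1 J2 W G h0 u0 v0 u v g h \<longleftrightarrow>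
     continuous_on {0..} g \<and> continuous_on {0..} h \<and> h 0 = h0 \<and> g 0 = - h0 \<and>
     continuous_on {(t, x). 0 \<le> t \<and> g t \<le> x \<and> x \<le> h t} (\<lambda>(t, x). u t x) \<and>
     continuous_on {(t, x). 0 \<le> t \<and> g t \<le> x \<and> x \<le> h t} (\<lambda>(t, x). v t x) \<and>
     (\<forall>t>0. \<forall>x. g t < x \<and> x < h t \<longrightarrow>
        ((\<lambda>s. u s x) has_real_derivative
           (d1 * integral {g t..h t} (\<lambda>y. J1 (x - y) * u t y) - d1 * u t x - a * u t x + e * v t x))
          (at t) \<and>
        ((\<lambda>s. v s x) has_real_derivative
           (d2 * integral {g t..h t} (\<lambda>y. J2 (x - y) * v t y) - d2 * v t x - b * v t x + G (u t x)))
          (at t)) \<and>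
     (\<forall>t\<ge>0. u t (g t) = 0 \<and> u t (h t) = 0 \<and> v t (g t) = 0 \<and> v t (h t) = 0) \<and>
     (\<forall>t>0. (h has_real_derivative
          (\<mu> * integral {g t..h t} (\<lambda>x. u t x * W_J J1 (h t - x) + \<rho> * v t x * W (h t - x))))
        (at t) \<and>
        (g has_real_derivative
          (- \<mu> * integral {g t..h t} (\<lambda>x. u t x * W_J J1 (x - g t) + \<rho> * v t x * W (x - g t))))
        (at t)) \<and>
     (\<forall>x\<in>{-h0..h0}. u 0 x = u0 x \<and> v 0 x = v0 x)"

end

theory Submission
  imports Defs
begin


lemma int_nonneg:
  fixes f :: "real \<Rightarrow> real"
  assumes "\<And>x. x \<in> S \<Longrightarrow> 0 \<le> f x" shows "0 \<le> integral S f"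
  by (metis assms integral_nonneg not_integrable_integral order_refl)

lemma mvt_lower:
  fixes f f' :: "real \<Rightarrow> real"
  assumes "a \<le> b" "continuous_on {a..b} f"
    and "\<And>x. a < x \<Longrightarrow> x < b \<Longrightarrow> (f has_real_derivative f' x) (at x)"
    and "\<And>x. a < x \<Longrightarrow> x < b \<Longrightarrow> c \<le> f' x"
  shows "c * (b - a) \<le> f b - f a"
proof -
  have "(\<lambda>x. f x - c * x) a \<le> (\<lambda>x. f x - c * x) b"
  proof (rule DERIV_nonneg_imp_increasing_open[OF assms(1)])
    fix x assume x: "a < x" "x < b"
    show "\<exists>y. ((\<lambda>x. f x - c * x) has_real_derivative y) (at x) \<and> 0 \<le> y"
      by (rule exI[of _ "f' x - c"]) (use assms(3,4)[OF x] in \<open>auto intro!: derivative_eq_intros\<close>)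
  next
    show "continuous_on {a..b} (\<lambda>x. f x - c * x)"
      by (intro continuous_intros assms(2))
  qed
  then show ?thesis by (simp add: algebra_simps)
qed

lemma mvt_upper:
  fixes f f' :: "real \<Rightarrow> real"
  assumes "a \<le> b" "continuous_on {a..b} f"
    and "\<And>x. a < x \<Longrightarrow> x < b \<Longrightarrow> (f has_real_derivative f' x) (at x)"
    and "\<And>x. a < x \<Longrightarrow> x < b \<Longrightarrow> f' x \<le> c"
  shows "f b - f a \<le> c * (b - a)"
proof -
  have "(-c) * (b - a) \<le> (\<lambda>x. - f x) b - (\<lambda>x. - f x) a"
    by (rule mvt_lower[where f'="\<lambda>x. - f' x"])
       (use assms in \<open>auto intro!: derivative_eq_intros continuous_intros\<close>)
  then show ?thesis by simp
qed

lemma deriv_touch: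
  fixes f :: "real \<Rightarrow> real"
  assumes "(f has_real_derivative D) (at t)" "0 \<le> f t" "d > 0"
    and "\<And>s. t - d < s \<Longrightarrow> s < t \<Longrightarrow> f s < 0"
  shows "0 \<le> D"
proof (rule ccontr)
  assume "\<not> 0 \<le> D"
  then obtain d' where d': "d' > 0" "\<And>h. h > 0 \<Longrightarrow> h < d' \<Longrightarrow> f t < f (t - h)"
    using DERIV_neg_dec_left[OF assms(1)] by force
  define h where "h = min d d' / 2"
  have "h > 0" "h < d" "h < d'" using d' assms(3) by (auto simp: h_def)
  then have "f t < f (t - h)" "f (t - h) < 0" using d' assms(4)[of "t - h"] by auto
  then show False using assms(2) by auto
qed

lemma deriv_touch_below:
  fixes f :: "real \<Rightarrow> real"
  assumes "(f has_real_derivative D) (at t)" "f t \<le> 0" "d > 0"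
    and "\<And>s. t - d < s \<Longrightarrow> s < t \<Longrightarrow> 0 < f s"
  shows "D \<le> 0"
  using deriv_touch[of "\<lambda>s. - f s" "-D" t d] assms
  by (auto intro!: derivative_eq_intros)

lemma deriv_const_left:
  fixes f :: "real \<Rightarrow> real"
  assumes "(f has_real_derivative D) (at t)" "d > 0"
    and "\<And>s. t - d < s \<Longrightarrow> s \<le> t \<Longrightarrow> f s = f t"
  shows "D = 0"
proof (rule ccontr)
  assume "D \<noteq> 0"
  then consider "D < 0" | "D > 0" by linarith
  then show False
  proof cases
    case 1
    then obtain d' where d': "d' > 0" "\<And>h. h > 0 \<Longrightarrow> h < d' \<Longrightarrow> f t < f (t - h)"
      using DERIV_neg_dec_left[OF assms(1)] by force
    define h where "h = min d d' / 2"
    have "h > 0" "h < d" "h < d'" using d' assms(2) by (auto simp: h_def)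
    then show False using d'(2)[of h] assms(3)[of "t - h"] by auto
  next
    case 2
    then obtain d' where d': "d' > 0" "\<And>h. h > 0 \<Longrightarrow> h < d' \<Longrightarrow> f (t - h) < f t"
      using DERIV_pos_inc_left[OF assms(1)] by force
    define h where "h = min d d' / 2"
    have "h > 0" "h < d" "h < d'" using d' assms(2) by (auto simp: h_def)
    then show False using d'(2)[of h] assms(3)[of "t - h"] by auto
  qed
qed

lemma integral_pos:
  fixes f :: "real \<Rightarrow> real"
  assumes "continuous_on {c..d} f" "\<And>x. x \<in> {c..d} \<Longrightarrow> 0 \<le> f x"
    and "y \<in> {c..d}" "f y > 0" "c < d"
  shows "integral {c..d} f > 0"
proof -
  have "continuous (at y within {c..d}) f"
    using assms(1,3) continuous_on_eq_continuous_within by blast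
  then obtain r where r: "r > 0" "\<And>x. x \<in> {c..d} \<Longrightarrow> dist x y < r \<Longrightarrow> dist (f x) (f y) < f y / 2"
    using assms(4) unfolding continuous_within_eps_delta by (metis half_gt_zero)
  define c' where "c' = max c (y - r/2)"
  define d' where "d' = min d (y + r/2)"
  have cd: "c \<le> c'" "c' \<le> d'" "d' \<le> d" "c' < d'"
    using assms(3,5) r(1) by (auto simp: c'_def d'_def)
  have pos: "f y / 2 \<le> f x" if "x \<in> {c'..d'}" for x
  proof -
    have "x \<in> {c..d}" "dist x y < r" using that cd r(1)
      by (auto simp: c'_def d'_def dist_real_def)
    then show ?thesis using r(2)[of x] by (auto simp: dist_real_def abs_less_iff) argo
  qed
  have int: "f integrable_on {c..d}" using assms(1) integrable_continuous_interval by blast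
  have int': "f integrable_on {c'..d'}" using integrable_on_subinterval[OF int] cd by auto
  have "0 < f y / 2 * (d' - c')" using cd assms(4) by auto
  also have "\<dots> = integral {c'..d'} (\<lambda>_. f y / 2)" using cd by simp
  also have "\<dots> \<le> integral {c'..d'} f"
    by (rule integral_le) (use pos int' cd in auto)
  also have "\<dots> \<le> integral {c..d} f"
    by (rule integral_subset_le) (use int int' cd assms(2) in auto)
  finally show ?thesis .
qed



lemma J_cont: "cond_J J \<Longrightarrow> continuous_on UNIV J" by (simp add: cond_J_def)
lemma J_nonneg: "cond_J J \<Longrightarrow> 0 \<le> J x" by (simp add: cond_J_def)
lemma J_sym: "cond_J J \<Longrightarrow> J (- x) = J x" by (simp add: cond_J_def)
lemma J_bound: assumes "cond_J J" obtains BJ where "BJ > 0" "\<And>x. J x \<le> BJ"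
proof -
  from assms have "bounded (range J)" by (simp add: cond_J_def)
  then obtain B where "\<And>x. norm (J x) \<le> B" by (auto simp: bounded_iff)
  then show ?thesis using that[of "max B 1"] by (metis abs_le_D1 less_max_iff_disj max.coboundedI1 real_norm_def zero_less_one)
qed

lemma J_pos_near0:
  assumes "cond_J J" obtains r where "r > 0" "\<And>z. \<bar>z\<bar> < r \<Longrightarrow> J z > 0"
proof -
  have "isCont J 0" using J_cont[OF assms] by (simp add: continuous_on_eq_continuous_at)
  moreover have "J 0 > 0" using assms by (simp add: cond_J_def)
  ultimately obtain r where "r > 0" "\<And>z. dist z 0 < r \<Longrightarrow> dist (J z) (J 0) < J 0"
    unfolding continuous_at_eps_delta by blast
  then show ?thesis using that[of r] by (force simp: dist_real_def abs_less_iff)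
qed

lemma J_int_atLeast:
  assumes "cond_J J" shows "J integrable_on {y..}"
proof -
  have "J absolutely_integrable_on UNIV"
    using assms unfolding cond_J_def
    by (meson has_integral_integrable nonnegative_absolutely_integrable_1)
  then have "J absolutely_integrable_on {y..}"
    using set_integrable_subset by fastforce
  then show ?thesis using absolutely_integrable_on_def by blast
qed

lemma W_J_split:
  assumes "cond_J J" "y \<le> z"
  shows "W_J J y = integral {y..z} J + W_J J z"
proof -
  have i1: "J integrable_on {y..z}"
    using integrable_continuous_interval continuous_on_subset[OF J_cont[OF assms(1)]] by blast
  have "{y..} = {y..z} \<union> {z..}" using assms(2) by auto
  moreover have "negligible ({y..z} \<inter> {z..})"
  proof -
    have "{y..z} \<inter> {z..} \<subseteq> {z}" by auto
    then show ?thesis using negligible_subset negligible_sing by blast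
  qed
  ultimately show ?thesis unfolding W_J_def
    using integral_Un[OF i1 J_int_atLeast[OF assms(1)]] by simp
qed

lemma W_J_nonneg: "cond_J J \<Longrightarrow> 0 \<le> W_J J y"
  unfolding W_J_def by (rule int_nonneg) (simp add: J_nonneg)

lemma W_J_antimono: assumes "cond_J J" "y \<le> z" shows "W_J J z \<le> W_J J y"
  using W_J_split[OF assms] int_nonneg[of "{y..z}" J] J_nonneg[OF assms(1)] by force

lemma W_J_lip:
  assumes "cond_J J" "\<And>x. J x \<le> BJ"
  shows "\<bar>W_J J y - W_J J z\<bar> \<le> BJ * \<bar>y - z\<bar>"
proof -
  have *: "\<bar>W_J J p - W_J J q\<bar> \<le> BJ * \<bar>p - q\<bar>" if "p \<le> q" for p q
  proof -
    have c: "continuous_on {p..q} J" using continuous_on_subset[OF J_cont[OF assms(1)]] by blast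
    have "W_J J p - W_J J q = integral {p..q} J" using W_J_split[OF assms(1) that] by simp
    moreover have "norm (integral {p..q} J) \<le> BJ * (q - p)"
      by (rule integral_bound[OF that c]) (use assms J_nonneg[OF assms(1)] in auto)
    ultimately show ?thesis using that by auto
  qed
  show ?thesis
  proof (cases "y \<le> z")
    case True then show ?thesis using *[OF True] by simp
  next
    case False then show ?thesis using *[of z y] by (simp add: abs_minus_commute)
  qed
qed

lemma W_J_cont: assumes "cond_J J" shows "continuous_on UNIV (W_J J)"
proof -
  obtain BJ where "BJ > 0" "\<And>x. J x \<le> BJ" using J_bound[OF assms] by blast
  then have "BJ-lipschitz_on UNIV (W_J J)"
    using W_J_lip[OF assms] by (intro lipschitz_onI) (auto simp: dist_real_def)
  then show ?thesis using lipschitz_on_continuous_on by blast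
qed

lemma W_J_pos: assumes "cond_J J" obtains r where "r > 0" "\<And>y. y < r \<Longrightarrow> W_J J y > 0"
proof -
  obtain r where r: "r > 0" "\<And>z. \<bar>z\<bar> < r \<Longrightarrow> J z > 0" using J_pos_near0[OF assms] by blast
  have "W_J J y > 0" if "y < r/2" for y
  proof -
    have "integral {y..r/2} J > 0"
      by (rule integral_pos[where y="r/2"])
        (use that r J_nonneg[OF assms] continuous_on_subset[OF J_cont[OF assms]] in auto)
    then show ?thesis using W_J_split[OF assms, of y "r/2"] W_J_nonneg[OF assms, of "r/2"] that by auto
  qed
  then show ?thesis using that[of "r/2"] r by auto
qed



lemma G_props:
  assumes "cond_G1 G"
  shows "G 0 = 0" "continuous_on {0..} G"
    and "\<And>p q. 0 \<le> q \<Longrightarrow> q < p \<Longrightarrow> G q < G p"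
proof -
  obtain G' where G': "\<And>z. z \<ge> 0 \<Longrightarrow> (G has_real_derivative G' z) (at z within {0..})"
    "continuous_on {0..} G'" "\<And>z. z \<ge> 0 \<Longrightarrow> G' z > 0"
    using assms unfolding cond_G1_def by blast
  show "G 0 = 0" using assms unfolding cond_G1_def by blast
  show c: "continuous_on {0..} G" by (rule DERIV_continuous_on[where D=G']) (use G'(1) in auto)
  fix p q :: real assume pq: "0 \<le> q" "q < p"
  have cq: "continuous_on {q..p} G" using continuous_on_subset[OF c] pq by auto
  have dq: "G differentiable (at x)" if "q < x" "x < p" for x
  proof -
    have "at x within {0..} = at x" using that pq by (intro at_within_interior) auto
    then show ?thesis using G'(1)[of x] that pq real_differentiable_def by auto
  qed
  obtain l z where lz: "q < z" "z < p" "(G has_real_derivative l) (at z)" "G p - G q = (p - q) * l"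
    using MVT[OF pq(2) cq dq] by blast
  have "at z within {0..} = at z" using lz(1) pq by (intro at_within_interior) auto
  then have "(G has_real_derivative G' z) (at z)" using G'(1)[of z] lz pq by auto
  then have "l = G' z" using DERIV_unique lz(3) by blast
  then have "l > 0" using G'(3)[of z] lz pq by auto
  then have "(p - q) * l > 0" using pq by auto
  then show "G q < G p" using lz(4) by linarith
qed

lemma G_lip:
  assumes "cond_G1 G" "B \<ge> 0"
  obtains L where "L \<ge> 0" "\<And>p q. 0 \<le> q \<Longrightarrow> q \<le> p \<Longrightarrow> p \<le> B \<Longrightarrow> G p - G q \<le> L * (p - q)"
proof -
  obtain G' where G': "\<And>z. z \<ge> 0 \<Longrightarrow> (G has_real_derivative G' z) (at z within {0..})"
    "continuous_on {0..} G'" "\<And>z. z \<ge> 0 \<Longrightarrow> G' z > 0"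
    using assms unfolding cond_G1_def by blast
  have "compact (G' ` {0..B})"
    by (meson Icc_subset_Ici_iff compact_Icc compact_continuous_image continuous_on_subset order_refl G'(2))
  then have "bounded (G' ` {0..B})" by (rule compact_imp_bounded)
  then obtain L where L0: "\<forall>z\<in>G' ` {0..B}. norm z \<le> L" unfolding bounded_iff by blast
  have L: "\<bar>G' z\<bar> \<le> L" if "z \<in> {0..B}" for z using L0 that by auto
  have c: "continuous_on {0..} G" using G_props[OF assms(1)] by blast
  show ?thesis
  proof (rule that[of L])
    show "L \<ge> 0" using L[of 0] assms by auto
    fix p q assume pq: "0 \<le> q" "q \<le> p" "p \<le> B"
    show "G p - G q \<le> L * (p - q)"
    proof (rule mvt_upper[where f'=G'])
      show "continuous_on {q..p} G" using continuous_on_subset[OF c] pq by auto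
      fix x assume x: "q < x" "x < p"
      have "at x within {0..} = at x" using x pq by (intro at_within_interior) auto
      then show "(G has_real_derivative G' x) (at x)" using G'(1)[of x] x pq by auto
      show "G' x \<le> L" using L[of x] x pq by auto
    qed (use pq in auto)
  qed
qed

definition Wc :: "(real \<Rightarrow> real) \<Rightarrow> real \<Rightarrow> real" where "Wc W y = W (max y 0)"

lemma W_props:
  assumes "cond_W W"
  shows "\<And>y. 0 \<le> Wc W y" "continuous_on UNIV (Wc W)" "\<And>y. y \<ge> 0 \<Longrightarrow> Wc W y = W y"
proof -
  show "\<And>y. 0 \<le> Wc W y" using assms by (simp add: cond_W_def Wc_def)
  show "\<And>y. y \<ge> 0 \<Longrightarrow> Wc W y = W y" by (simp add: Wc_def)
  have "continuous_on {0..R} W" if "R \<ge> 0" for R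
  proof -
    from assms that obtain L where "L-lipschitz_on {0..R} W" unfolding cond_W_def by blast
    then show ?thesis by (rule lipschitz_on_continuous_on)
  qed
  then have cW: "continuous_on {0..} W"
  proof -
    have "continuous (at x within {0..}) W" if "x \<ge> 0" for x
    proof -
      have "continuous_on {0..x+1} W" using \<open>\<And>R. R \<ge> 0 \<Longrightarrow> continuous_on {0..R} W\<close> that by auto
      then have "continuous (at x within {0..x+1}) W" using that continuous_on_imp_continuous_within[of "{0..x+1}" W "{0..x+1}" x] by auto
      moreover have "at x within {0..x+1} = at x within {0..}"
        by (rule at_within_nhd[of _ "{x - 1 <..< x + 1}"]) auto
      ultimately show ?thesis by simp
    qed
    then show ?thesis by (simp add: continuous_on_eq_continuous_within)
  qed
  show "continuous_on UNIV (Wc W)" unfolding Wc_def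
    by (rule continuous_on_compose2[OF cW]) (auto intro!: continuous_intros)
qed

lemma W_bound: assumes "cond_W W" obtains BW where "BW \<ge> 0" "\<And>y. Wc W y \<le> BW"
proof -
  have "bounded (W ` {0..})" using assms by (simp add: cond_W_def)
  then obtain B where B0: "\<forall>z\<in>W ` {0..}. norm z \<le> B" unfolding bounded_iff by blast
  have B: "norm (W y) \<le> B" if "y \<in> {0..}" for y using B0 that by blast
  have "0 \<le> B" using B[of 0] by auto
  moreover have "Wc W y \<le> B" for y using B[of "max y 0"] unfolding Wc_def by auto
  ultimately show ?thesis using that by blast
qed

lemma W_lip: assumes "cond_W W" "R \<ge> 0"
  obtains L where "L \<ge> 0" "\<And>p q. p \<in> {0..R} \<Longrightarrow> q \<in> {0..R} \<Longrightarrow> \<bar>W p - W q\<bar> \<le> L * \<bar>p - q\<bar>"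
proof -
  from assms obtain L where L: "L-lipschitz_on {0..R} W" unfolding cond_W_def by blast
  have "L \<ge> 0" using lipschitz_on_nonneg[OF L] .
  moreover have "\<bar>W p - W q\<bar> \<le> L * \<bar>p - q\<bar>" if "p \<in> {0..R}" "q \<in> {0..R}" for p q
    using lipschitz_onD[OF L that] by (simp add: dist_real_def)
  ultimately show ?thesis using that by blast
qed



lemma closed_pre:
  fixes f :: "real \<times> real \<Rightarrow> real"
  assumes "continuous_on ({0..} \<times> UNIV) f"
  shows "closed {p \<in> {0..} \<times> UNIV. 0 \<le> f p}"
proof -
  have "closed (({0..} \<times> UNIV) \<inter> f -` {0..})"
    by (rule continuous_closed_preimage[OF assms]) (auto intro: closed_Times)
  moreover have "{p \<in> {0..} \<times> UNIV. 0 \<le> f p} = ({0..} \<times> UNIV) \<inter> f -` {0..}" by auto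
  ultimately show ?thesis by simp
qed

lemma zero_ext_cont:
  fixes g h :: "real \<Rightarrow> real" and w :: "real \<Rightarrow> real \<Rightarrow> real"
  assumes g: "continuous_on {0..} g" and h: "continuous_on {0..} h"
    and w: "continuous_on {(t, x). 0 \<le> t \<and> g t \<le> x \<and> x \<le> h t} (\<lambda>(t, x). w t x)"
    and bd: "\<And>t. t \<ge> 0 \<Longrightarrow> w t (g t) = 0 \<and> w t (h t) = 0"
  shows "continuous_on ({0..} \<times> UNIV) (\<lambda>(t, x). if g t \<le> x \<and> x \<le> h t then w t x else 0)"
proof -
  let ?f = "\<lambda>(t, x). if g t \<le> x \<and> x \<le> h t then w t x else 0"
  have cg: "continuous_on ({0..} \<times> UNIV) (\<lambda>p. g (fst p))"
    by (rule continuous_on_compose2[OF g]) (auto intro!: continuous_intros)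
  have ch: "continuous_on ({0..} \<times> UNIV) (\<lambda>p. h (fst p))"
    by (rule continuous_on_compose2[OF h]) (auto intro!: continuous_intros)
  define D where "D = {p \<in> {0..} \<times> UNIV. 0 \<le> snd p - g (fst p)} \<inter> {p \<in> {0..} \<times> UNIV. 0 \<le> h (fst p) - snd p}"
  define B1 where "B1 = {p \<in> {0..} \<times> UNIV. 0 \<le> g (fst p) - snd p}"
  define B2 where "B2 = {p \<in> {0..} \<times> UNIV. 0 \<le> snd p - h (fst p)}"
  have cD: "closed D" unfolding D_def
    by (intro closed_Int closed_pre) (auto intro!: continuous_intros cg ch)
  have cB1: "closed B1" unfolding B1_def by (intro closed_pre) (auto intro!: continuous_intros cg ch)
  have cB2: "closed B2" unfolding B2_def by (intro closed_pre) (auto intro!: continuous_intros cg ch)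
  have D_eq: "D = {(t, x). 0 \<le> t \<and> g t \<le> x \<and> x \<le> h t}" unfolding D_def by auto
  have "continuous_on D ?f"
    by (rule continuous_on_eq[OF w[folded D_eq]]) (auto simp: D_eq)
  moreover have "continuous_on B1 ?f"
    by (rule continuous_on_eq[OF continuous_on_const[of _ 0]])
       (auto simp: B1_def bd dest: antisym)
  moreover have "continuous_on B2 ?f"
    by (rule continuous_on_eq[OF continuous_on_const[of _ 0]])
       (auto simp: B2_def bd dest: antisym)
  ultimately have "continuous_on (D \<union> B1 \<union> B2) ?f"
    using cD cB1 cB2 by (intro continuous_on_closed_Un closed_Un) auto
  moreover have "D \<union> B1 \<union> B2 = {0..} \<times> UNIV" unfolding D_def B1_def B2_def by auto
  ultimately show ?thesis by simp
qed



locale solP =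
  fixes d1 d2 a b e \<rho> \<mu> h0 :: real
    and J1 J2 W G u0 v0 g h :: "real \<Rightarrow> real"
    and u v :: "real \<Rightarrow> real \<Rightarrow> real"
  assumes d1: "d1 > 0" and d2: "d2 > 0" and a: "a > 0" and b: "b > 0" and e: "e > 0"
    and rho: "\<rho> > 0" and h0: "h0 > 0" and mu: "\<mu> > 0"
    and J1: "cond_J J1" and J2: "cond_J J2" and W: "cond_W W" and G: "cond_G1 G"
    and IC: "cond_IC h0 u0 v0"
    and sol: "sol_P d1 d2 a b e \<rho> \<mu> J1 J2 W G h0 u0 v0 u v g h"
begin

lemma g_cont: "continuous_on {0..} g" and h_cont: "continuous_on {0..} h"
  and h_0: "h 0 = h0" and g_0: "g 0 = - h0"
  and u_cont: "continuous_on {(t, x). 0 \<le> t \<and> g t \<le> x \<and> x \<le> h t} (\<lambda>(t, x). u t x)"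
  and v_cont: "continuous_on {(t, x). 0 \<le> t \<and> g t \<le> x \<and> x \<le> h t} (\<lambda>(t, x). v t x)"
  using sol unfolding sol_P_def by auto

lemma du: "t > 0 \<Longrightarrow> g t < x \<Longrightarrow> x < h t \<Longrightarrow> ((\<lambda>s. u s x) has_real_derivative
           (d1 * integral {g t..h t} (\<lambda>y. J1 (x - y) * u t y) - d1 * u t x - a * u t x + e * v t x)) (at t)"
  and dv: "t > 0 \<Longrightarrow> g t < x \<Longrightarrow> x < h t \<Longrightarrow> ((\<lambda>s. v s x) has_real_derivative
           (d2 * integral {g t..h t} (\<lambda>y. J2 (x - y) * v t y) - d2 * v t x - b * v t x + G (u t x))) (at t)"
  using sol unfolding sol_P_def by blast+

lemma bd: "t \<ge> 0 \<Longrightarrow> u t (g t) = 0 \<and> u t (h t) = 0 \<and> v t (g t) = 0 \<and> v t (h t) = 0"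
  using sol unfolding sol_P_def by blast

lemma dh: "t > 0 \<Longrightarrow> (h has_real_derivative
          (\<mu> * integral {g t..h t} (\<lambda>x. u t x * W_J J1 (h t - x) + \<rho> * v t x * W (h t - x)))) (at t)"
  and dg: "t > 0 \<Longrightarrow> (g has_real_derivative
          (- \<mu> * integral {g t..h t} (\<lambda>x. u t x * W_J J1 (x - g t) + \<rho> * v t x * W (x - g t)))) (at t)"
  using sol unfolding sol_P_def by blast+

lemma init: "x \<in> {-h0..h0} \<Longrightarrow> u 0 x = u0 x \<and> v 0 x = v0 x"
  using sol unfolding sol_P_def by blast

lemma u0_nonneg: "x \<in> {-h0..h0} \<Longrightarrow> 0 \<le> u0 x \<and> 0 \<le> v0 x"
proof -
  assume x: "x \<in> {-h0..h0}"
  show ?thesis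
  proof (cases "x = h0 \<or> x = -h0")
    case True then show ?thesis using IC unfolding cond_IC_def by auto
  next
    case False
    then have "-h0 < x" "x < h0" using x by auto
    then show ?thesis using IC unfolding cond_IC_def by auto
  qed
qed

lemma u0_pos: "-h0 < x \<Longrightarrow> x < h0 \<Longrightarrow> 0 < u0 x \<and> 0 < v0 x"
  using IC unfolding cond_IC_def by blast

definition U where "U t x = (if g t \<le> x \<and> x \<le> h t then u t x else 0)"
definition V where "V t x = (if g t \<le> x \<and> x \<le> h t then v t x else 0)"

lemma U_cont: "continuous_on ({0..} \<times> UNIV) (\<lambda>(t, x). U t x)"
  unfolding U_def by (rule zero_ext_cont[OF g_cont h_cont u_cont]) (use bd in auto)
lemma V_cont: "continuous_on ({0..} \<times> UNIV) (\<lambda>(t, x). V t x)"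
  unfolding V_def by (rule zero_ext_cont[OF g_cont h_cont v_cont]) (use bd in auto)

lemma U_cont_t: "continuous_on {0..} (\<lambda>t. U t x)"
  by (rule continuous_on_compose2[OF U_cont, of _ "\<lambda>t. (t, x)", simplified]) (auto intro!: continuous_intros)
lemma V_cont_t: "continuous_on {0..} (\<lambda>t. V t x)"
  by (rule continuous_on_compose2[OF V_cont, of _ "\<lambda>t. (t, x)", simplified]) (auto intro!: continuous_intros)
lemma U_cont_x: "t \<ge> 0 \<Longrightarrow> continuous_on UNIV (U t)"
  by (rule continuous_on_compose2[OF U_cont, of _ "\<lambda>x. (t, x)", simplified]) (auto intro!: continuous_intros)
lemma V_cont_x: "t \<ge> 0 \<Longrightarrow> continuous_on UNIV (V t)"
  by (rule continuous_on_compose2[OF V_cont, of _ "\<lambda>x. (t, x)", simplified]) (auto intro!: continuous_intros)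

lemma U_in: "g t \<le> x \<Longrightarrow> x \<le> h t \<Longrightarrow> U t x = u t x" and V_in: "g t \<le> x \<Longrightarrow> x \<le> h t \<Longrightarrow> V t x = v t x"
  by (auto simp: U_def V_def)
lemma U_out: "\<not> (g t \<le> x \<and> x \<le> h t) \<Longrightarrow> U t x = 0" and V_out: "\<not> (g t \<le> x \<and> x \<le> h t) \<Longrightarrow> V t x = 0"
  by (auto simp: U_def V_def)
lemma U_bd: "t \<ge> 0 \<Longrightarrow> (x = g t \<or> x = h t) \<Longrightarrow> U t x = 0"
  and V_bd: "t \<ge> 0 \<Longrightarrow> (x = g t \<or> x = h t) \<Longrightarrow> V t x = 0"
  using bd by (auto simp: U_def V_def)

lemma interior_nbhd:
  assumes "t > 0" "g t < x" "x < h t"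
  obtains S where "open S" "t \<in> S" "\<And>s. s \<in> S \<Longrightarrow> s > 0 \<and> g s < x \<and> x < h s"
proof -
  have cg: "continuous_on {0<..} g" by (rule continuous_on_subset[OF g_cont]) auto
  have ch: "continuous_on {0<..} h" by (rule continuous_on_subset[OF h_cont]) auto
  define S where "S = ({0<..} \<inter> g -` {..<x}) \<inter> ({0<..} \<inter> h -` {x<..})"
  have "open S" unfolding S_def
    by (intro open_Int continuous_open_preimage[OF cg] continuous_open_preimage[OF ch]) auto
  moreover have "t \<in> S" using assms by (auto simp: S_def)
  ultimately show ?thesis using that[of S] by (auto simp: S_def)
qed

lemma interior_near:
  assumes "t > 0" "g t < x" "x < h t"
  obtains d where "d > 0" "\<And>s. \<bar>s - t\<bar> < d \<Longrightarrow> s > 0 \<and> g s < x \<and> x < h s"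
proof -
  obtain S where S: "open S" "t \<in> S" "\<And>s. s \<in> S \<Longrightarrow> s > 0 \<and> g s < x \<and> x < h s"
    using interior_nbhd[OF assms] by blast
  then obtain d where "d > 0" "ball t d \<subseteq> S" using openE by blast
  moreover have "s \<in> S" if "\<bar>s - t\<bar> < d" for s
    using that \<open>ball t d \<subseteq> S\<close> by (auto simp: dist_real_def abs_minus_commute)
  ultimately show ?thesis using that[of d] S(3) by blast
qed

lemma dU: "t > 0 \<Longrightarrow> g t < x \<Longrightarrow> x < h t \<Longrightarrow> ((\<lambda>s. U s x) has_real_derivative
           (d1 * integral {g t..h t} (\<lambda>y. J1 (x - y) * u t y) - d1 * u t x - a * u t x + e * v t x)) (at t)"
proof -
  assume as: "t > 0" "g t < x" "x < h t"
  obtain S where S: "open S" "t \<in> S" "\<And>s. s \<in> S \<Longrightarrow> s > 0 \<and> g s < x \<and> x < h s"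
    using interior_nbhd[OF as] by blast
  show ?thesis
    by (rule has_field_derivative_transform_within_open[OF du[OF as] S(1,2)]) (use S(3) U_in in force)
qed

lemma dV: "t > 0 \<Longrightarrow> g t < x \<Longrightarrow> x < h t \<Longrightarrow> ((\<lambda>s. V s x) has_real_derivative
           (d2 * integral {g t..h t} (\<lambda>y. J2 (x - y) * v t y) - d2 * v t x - b * v t x + G (u t x))) (at t)"
proof -
  assume as: "t > 0" "g t < x" "x < h t"
  obtain S where S: "open S" "t \<in> S" "\<And>s. s \<in> S \<Longrightarrow> s > 0 \<and> g s < x \<and> x < h s"
    using interior_nbhd[OF as] by blast
  show ?thesis
    by (rule has_field_derivative_transform_within_open[OF dv[OF as] S(1,2)]) (use S(3) V_in in force)
qed

end


lemma push:
  fixes \<phi> :: "real \<Rightarrow> real"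
  assumes "\<alpha> \<le> \<beta>" "continuous_on {\<alpha>..\<beta>} \<phi>" "0 \<le> \<phi> \<alpha>"
    and "\<And>s. \<alpha> < s \<Longrightarrow> s < \<beta> \<Longrightarrow> \<phi> s < 0 \<Longrightarrow> \<exists>D. (\<phi> has_real_derivative D) (at s) \<and> 0 \<le> D"
  shows "0 \<le> \<phi> \<beta>"
proof (rule ccontr)
  assume neg: "\<not> 0 \<le> \<phi> \<beta>"
  define A where "A = {\<alpha>..\<beta>} \<inter> \<phi> -` {0..}"
  have "closed A" unfolding A_def by (rule continuous_closed_preimage[OF assms(2)]) auto
  moreover have "A \<noteq> {}" using assms(1,3) by (auto simp: A_def)
  moreover have "bdd_above A" unfolding A_def by (rule bdd_aboveI[of _ \<beta>]) auto
  ultimately have sA: "Sup A \<in> A" by (rule closed_contains_Sup[rotated 2])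
  define s0 where "s0 = Sup A"
  have s0: "\<alpha> \<le> s0" "s0 \<le> \<beta>" "0 \<le> \<phi> s0" using sA by (auto simp: A_def s0_def)
  have after: "\<phi> s < 0" if "s0 < s" "s \<le> \<beta>" for s
  proof (rule ccontr)
    assume "\<not> \<phi> s < 0"
    then have "s \<in> A" using that s0 by (auto simp: A_def)
    then have "s \<le> s0" unfolding s0_def by (rule cSup_upper) (rule bdd_aboveI[of _ \<beta>], auto simp: A_def)
    then show False using that by auto
  qed
  have "s0 \<noteq> \<beta>" using s0 neg by auto
  then have "s0 < \<beta>" using s0 by auto
  have "\<phi> s0 \<le> \<phi> \<beta>"
  proof (rule DERIV_nonneg_imp_increasing_open[where f=\<phi>])
    show "s0 \<le> \<beta>" using s0 by auto
    show "continuous_on {s0..\<beta>} \<phi>" using continuous_on_subset[OF assms(2)] s0 by auto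
    fix s assume "s0 < s" "s < \<beta>"
    then show "\<exists>y. (\<phi> has_real_derivative y) (at s) \<and> 0 \<le> y"
      using assms(4)[of s] after[of s] s0 by auto
  qed
  then show False using s0 neg by auto
qed

lemma left_limit_nonneg:
  fixes \<phi> :: "real \<Rightarrow> real"
  assumes "continuous_on {0..} \<phi>" "t1 > 0" "\<And>s. 0 \<le> s \<Longrightarrow> s < t1 \<Longrightarrow> 0 \<le> \<phi> s"
  shows "0 \<le> \<phi> t1"
proof (rule ccontr)
  assume neg: "\<not> 0 \<le> \<phi> t1"
  have "continuous (at t1 within {0..}) \<phi>"
    using continuous_on_imp_continuous_within[OF assms(1), of "{0..}" t1] assms(2) by auto
  then obtain d where d: "d > 0" "\<And>s. s \<in> {0..} \<Longrightarrow> dist s t1 < d \<Longrightarrow> dist (\<phi> s) (\<phi> t1) < - \<phi> t1"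
    using neg unfolding continuous_within_eps_delta by (metis neg_0_less_iff_less not_le)
  define s where "s = max 0 (t1 - d/2)"
  have "0 \<le> s" "s < t1" "dist s t1 < d" using d assms(2) by (auto simp: s_def dist_real_def)
  then have "dist (\<phi> s) (\<phi> t1) < - \<phi> t1" "0 \<le> \<phi> s" using d assms(3) by auto
  then show False by (auto simp: dist_real_def)
qed

lemma dist_pair_lt:
  fixes a b c d :: real
  assumes "\<bar>a - c\<bar> < r/2" "\<bar>b - d\<bar> < r/2"
  shows "dist (a, b) (c, d) < r"
proof -
  have "dist (a, b) (c, d) = sqrt ((dist a c)\<^sup>2 + (dist b d)\<^sup>2)" by (rule dist_Pair_Pair)
  also have "\<dots> \<le> sqrt ((dist a c + dist b d)\<^sup>2)"
    by (intro real_sqrt_le_mono) (simp add: power2_eq_square algebra_simps)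
  also have "\<dots> = dist a c + dist b d" by simp
  also have "\<dots> < r" using assms by (auto simp: dist_real_def)
  finally show ?thesis .
qed

context solP begin

definition N where "N t \<longleftrightarrow> (\<forall>x. 0 \<le> U t x \<and> 0 \<le> V t x)"

lemma int_ext:
  assumes "-R \<le> g t" "h t \<le> R"
  shows "integral {g t..h t} (\<lambda>y. f y * u t y) = integral {-R..R} (\<lambda>y. f y * U t y)"
    and "integral {g t..h t} (\<lambda>y. f y * v t y) = integral {-R..R} (\<lambda>y. f y * V t y)"
proof -
  have "integral {-R..R} (\<lambda>y. f y * U t y) = integral {-R..R} (\<lambda>y. if y \<in> {g t..h t} then f y * u t y else 0)"
    by (rule integral_cong) (auto simp: U_def)
  also have "\<dots> = integral ({g t..h t} \<inter> {-R..R}) (\<lambda>y. f y * u t y)" by (rule integral_restrict_Int)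
  also have "{g t..h t} \<inter> {-R..R} = {g t..h t}" using assms by auto
  finally show "integral {g t..h t} (\<lambda>y. f y * u t y) = integral {-R..R} (\<lambda>y. f y * U t y)" by simp
  have "integral {-R..R} (\<lambda>y. f y * V t y) = integral {-R..R} (\<lambda>y. if y \<in> {g t..h t} then f y * v t y else 0)"
    by (rule integral_cong) (auto simp: V_def)
  also have "\<dots> = integral ({g t..h t} \<inter> {-R..R}) (\<lambda>y. f y * v t y)" by (rule integral_restrict_Int)
  also have "{g t..h t} \<inter> {-R..R} = {g t..h t}" using assms by auto
  finally show "integral {g t..h t} (\<lambda>y. f y * v t y) = integral {-R..R} (\<lambda>y. f y * V t y)" by simp
qed

lemma N_u: "N t \<Longrightarrow> g t \<le> x \<Longrightarrow> x \<le> h t \<Longrightarrow> 0 \<le> u t x \<and> 0 \<le> v t x"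
proof -
  assume "N t" "g t \<le> x" "x \<le> h t"
  then have "0 \<le> U t x" "0 \<le> V t x" by (auto simp: N_def)
  moreover have "U t x = u t x" "V t x = v t x" using U_in V_in \<open>g t \<le> x\<close> \<open>x \<le> h t\<close> by auto
  ultimately show ?thesis by simp
qed

lemma G_pos: "0 < z \<Longrightarrow> 0 < G z"
proof -
  assume "0 < z"
  then have "G 0 < G z" using G_props(3)[OF G, of 0 z] by simp
  then show ?thesis using G_props(1)[OF G] by simp
qed

lemma G_nonneg: "0 \<le> z \<Longrightarrow> 0 \<le> G z"
proof -
  assume "0 \<le> z"
  then consider "z = 0" | "0 < z" by linarith
  then show ?thesis
  proof cases
    case 1 then show ?thesis using G_props(1)[OF G] by simp
  next
    case 2 then show ?thesis using G_pos by fastforce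
  qed
qed

lemma dh_nonneg:
  assumes "t > 0" "N t"
  shows "0 \<le> \<mu> * integral {g t..h t} (\<lambda>x. u t x * W_J J1 (h t - x) + \<rho> * v t x * W (h t - x))"
proof -
  have "0 \<le> u t x * W_J J1 (h t - x) + \<rho> * v t x * W (h t - x)" if "x \<in> {g t..h t}" for x
  proof -
    have "0 \<le> W (h t - x)" using W that unfolding cond_W_def by auto
    then show ?thesis using N_u[OF assms(2)] that W_J_nonneg[OF J1] rho by auto
  qed
  then have "0 \<le> integral {g t..h t} (\<lambda>x. u t x * W_J J1 (h t - x) + \<rho> * v t x * W (h t - x))"
    by (rule int_nonneg)
  then show ?thesis using mu by simp
qed

lemma dg_nonpos:
  assumes "t > 0" "N t"
  shows "- \<mu> * integral {g t..h t} (\<lambda>x. u t x * W_J J1 (x - g t) + \<rho> * v t x * W (x - g t)) \<le> 0"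
proof -
  have "0 \<le> u t x * W_J J1 (x - g t) + \<rho> * v t x * W (x - g t)" if "x \<in> {g t..h t}" for x
  proof -
    have "0 \<le> W (x - g t)" using W that unfolding cond_W_def by auto
    then show ?thesis using N_u[OF assms(2)] that W_J_nonneg[OF J1] rho by auto
  qed
  then have "0 \<le> integral {g t..h t} (\<lambda>x. u t x * W_J J1 (x - g t) + \<rho> * v t x * W (x - g t))"
    by (rule int_nonneg)
  then show ?thesis using mu by (simp add: mult_nonneg_nonneg)
qed

lemma mono_N:
  assumes "\<And>\<tau>. s < \<tau> \<Longrightarrow> \<tau> < t \<Longrightarrow> N \<tau>" "0 \<le> s" "s \<le> t"
  shows "h s \<le> h t" "g t \<le> g s"
proof -
  show "h s \<le> h t"
  proof (rule DERIV_nonneg_imp_increasing_open[OF assms(3)])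
    fix \<tau> assume "s < \<tau>" "\<tau> < t"
    then have "\<tau> > 0" "N \<tau>" using assms by auto
    then show "\<exists>y. (h has_real_derivative y) (at \<tau>) \<and> 0 \<le> y"
      using dh dh_nonneg by blast
  next
    show "continuous_on {s..t} h" by (rule continuous_on_subset[OF h_cont]) (use assms in auto)
  qed
  show "g t \<le> g s"
  proof (rule DERIV_nonpos_imp_decreasing_open[OF assms(3)])
    fix \<tau> assume "s < \<tau>" "\<tau> < t"
    then have "\<tau> > 0" "N \<tau>" using assms by auto
    then show "\<exists>y. (g has_real_derivative y) (at \<tau>) \<and> y \<le> 0"
      using dg dg_nonpos by blast
  next
    show "continuous_on {s..t} g" by (rule continuous_on_subset[OF g_cont]) (use assms in auto)
  qed
qed

lemma nonlocal_nonneg: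
  assumes "N t" "cond_J J"
  shows "0 \<le> integral {g t..h t} (\<lambda>y. J (x - y) * u t y)" "0 \<le> integral {g t..h t} (\<lambda>y. J (x - y) * v t y)"
  using N_u[OF assms(1)] J_nonneg[OF assms(2)] by (auto intro!: int_nonneg)

lemma lemmaA_u:
  assumes "\<And>\<tau>. s < \<tau> \<Longrightarrow> \<tau> < t \<Longrightarrow> N \<tau> \<and> g \<tau> < x \<and> x < h \<tau>" "0 \<le> s" "s \<le> t"
  shows "exp ((d1 + a) * s) * U s x \<le> exp ((d1 + a) * t) * U t x"
proof (rule DERIV_nonneg_imp_increasing_open[OF assms(3), where f="\<lambda>\<tau>. exp ((d1 + a) * \<tau>) * U \<tau> x"])
  fix \<tau> assume \<tau>: "s < \<tau>" "\<tau> < t"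
  have N\<tau>: "N \<tau>" and x: "g \<tau> < x" "x < h \<tau>" using assms(1)[OF \<tau>] by auto
  have t0: "\<tau> > 0" using \<tau> assms by auto
  let ?I = "integral {g \<tau>..h \<tau>} (\<lambda>y. J1 (x - y) * u \<tau> y)"
  have "((\<lambda>\<tau>. exp ((d1 + a) * \<tau>) * U \<tau> x) has_real_derivative
      exp ((d1 + a) * \<tau>) * (d1 + a) * U \<tau> x + exp ((d1 + a) * \<tau>) * (d1 * ?I - d1 * u \<tau> x - a * u \<tau> x + e * v \<tau> x)) (at \<tau>)"
    by (rule derivative_eq_intros dU[OF t0 x] refl)+ simp
  moreover have "exp ((d1 + a) * \<tau>) * (d1 + a) * U \<tau> x + exp ((d1 + a) * \<tau>) * (d1 * ?I - d1 * u \<tau> x - a * u \<tau> x + e * v \<tau> x)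
      = exp ((d1 + a) * \<tau>) * (d1 * ?I + e * v \<tau> x)"
    using x by (simp add: U_in algebra_simps)
  moreover have "0 \<le> exp ((d1 + a) * \<tau>) * (d1 * ?I + e * v \<tau> x)"
    using nonlocal_nonneg[OF N\<tau> J1] N_u[OF N\<tau>] x d1 e by auto
  ultimately show "\<exists>y. ((\<lambda>\<tau>. exp ((d1 + a) * \<tau>) * U \<tau> x) has_real_derivative y) (at \<tau>) \<and> 0 \<le> y"
    by (intro exI[of _ "exp ((d1 + a) * \<tau>) * (d1 * ?I + e * v \<tau> x)"]) simp
next
  show "continuous_on {s..t} (\<lambda>\<tau>. exp ((d1 + a) * \<tau>) * U \<tau> x)"
    by (intro continuous_intros continuous_on_subset[OF U_cont_t]) (use assms in auto)
qed

lemma lemmaA_v: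
  assumes "\<And>\<tau>. s < \<tau> \<Longrightarrow> \<tau> < t \<Longrightarrow> N \<tau> \<and> g \<tau> < x \<and> x < h \<tau>" "0 \<le> s" "s \<le> t"
  shows "exp ((d2 + b) * s) * V s x \<le> exp ((d2 + b) * t) * V t x"
proof (rule DERIV_nonneg_imp_increasing_open[OF assms(3), where f="\<lambda>\<tau>. exp ((d2 + b) * \<tau>) * V \<tau> x"])
  fix \<tau> assume \<tau>: "s < \<tau>" "\<tau> < t"
  have N\<tau>: "N \<tau>" and x: "g \<tau> < x" "x < h \<tau>" using assms(1)[OF \<tau>] by auto
  have t0: "\<tau> > 0" using \<tau> assms by auto
  let ?I = "integral {g \<tau>..h \<tau>} (\<lambda>y. J2 (x - y) * v \<tau> y)"
  have "((\<lambda>\<tau>. exp ((d2 + b) * \<tau>) * V \<tau> x) has_real_derivative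
      exp ((d2 + b) * \<tau>) * (d2 + b) * V \<tau> x + exp ((d2 + b) * \<tau>) * (d2 * ?I - d2 * v \<tau> x - b * v \<tau> x + G (u \<tau> x))) (at \<tau>)"
    by (rule derivative_eq_intros dV[OF t0 x] refl)+ simp
  moreover have "exp ((d2 + b) * \<tau>) * (d2 + b) * V \<tau> x + exp ((d2 + b) * \<tau>) * (d2 * ?I - d2 * v \<tau> x - b * v \<tau> x + G (u \<tau> x))
      = exp ((d2 + b) * \<tau>) * (d2 * ?I + G (u \<tau> x))"
    using x by (simp add: V_in algebra_simps)
  moreover have "0 \<le> exp ((d2 + b) * \<tau>) * (d2 * ?I + G (u \<tau> x))"
    using nonlocal_nonneg[OF N\<tau> J2] N_u[OF N\<tau>] x d2 G_nonneg by auto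
  ultimately show "\<exists>y. ((\<lambda>\<tau>. exp ((d2 + b) * \<tau>) * V \<tau> x) has_real_derivative y) (at \<tau>) \<and> 0 \<le> y"
    by (intro exI[of _ "exp ((d2 + b) * \<tau>) * (d2 * ?I + G (u \<tau> x))"]) simp
next
  show "continuous_on {s..t} (\<lambda>\<tau>. exp ((d2 + b) * \<tau>) * V \<tau> x)"
    by (intro continuous_intros continuous_on_subset[OF V_cont_t]) (use assms in auto)
qed

end


context solP begin

lemma N_bounds:
  assumes "\<forall>\<tau>\<in>{0..t}. N \<tau>" "0 \<le> s" "s \<le> t"
  shows "h0 \<le> h s" "g s \<le> - h0"
  using mono_N[of 0 s] assms h_0 g_0 by auto

lemma u_cont_on_interval:
  assumes "t \<ge> 0" shows "continuous_on {g t..h t} (u t)" "continuous_on {g t..h t} (v t)"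
proof -
  show "continuous_on {g t..h t} (u t)"
    by (rule continuous_on_eq[OF continuous_on_subset[OF U_cont_x[OF assms]]]) (auto simp: U_in)
  show "continuous_on {g t..h t} (v t)"
    by (rule continuous_on_eq[OF continuous_on_subset[OF V_cont_x[OF assms]]]) (auto simp: V_in)
qed

lemma zero_left:
  assumes N: "\<forall>\<tau>\<in>{0..t}. N \<tau>" and t: "t > 0" and y: "g t < y" "y < h t"
  obtains d where "d > 0" "\<And>s. t - d < s \<Longrightarrow> s \<le> t \<Longrightarrow> exp ((d1 + a) * s) * U s y \<le> exp ((d1 + a) * t) * U t y"
     "\<And>s. t - d < s \<Longrightarrow> s \<le> t \<Longrightarrow> exp ((d2 + b) * s) * V s y \<le> exp ((d2 + b) * t) * V t y"
     "\<And>s. t - d < s \<Longrightarrow> s \<le> t \<Longrightarrow> 0 \<le> s"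
proof -
  obtain d where d: "d > 0" "\<And>s. \<bar>s - t\<bar> < d \<Longrightarrow> s > 0 \<and> g s < y \<and> y < h s"
    using interior_near[OF t y] by blast
  define d' where "d' = min d t"
  have d': "d' > 0" using d t by (auto simp: d'_def)
  have pre: "N \<tau> \<and> g \<tau> < y \<and> y < h \<tau>" if "s < \<tau>" "\<tau> < t" "t - d' < s" for s \<tau>
    using that N d(2)[of \<tau>] by (auto simp: d'_def)
  show ?thesis
  proof (rule that[OF d'])
    fix s assume s: "t - d' < s" "s \<le> t"
    show "0 \<le> s" using s by (auto simp: d'_def)
    show "exp ((d1 + a) * s) * U s y \<le> exp ((d1 + a) * t) * U t y"
      by (rule lemmaA_u) (use pre s in \<open>auto simp: d'_def\<close>)
    show "exp ((d2 + b) * s) * V s y \<le> exp ((d2 + b) * t) * V t y"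
      by (rule lemmaA_v) (use pre s in \<open>auto simp: d'_def\<close>)
  qed
qed

lemma zero_spread:
  assumes N: "\<forall>\<tau>\<in>{0..t}. N \<tau>" and t: "t > 0" and y: "g t < y" "y < h t" "u t y = 0"
    and r: "\<And>z. \<bar>z\<bar> < r \<Longrightarrow> J1 z > 0"
    and z: "g t < z" "z < h t" "\<bar>z - y\<bar> < r"
  shows "u t z = 0"
proof (rule ccontr)
  assume nz: "u t z \<noteq> 0"
  have Nt: "N t" using N t by auto
  then have "0 \<le> u t z" using N_u z by auto
  with nz have zpos: "0 < u t z" by auto
  obtain d where d: "d > 0" "\<And>s. t - d < s \<Longrightarrow> s \<le> t \<Longrightarrow> exp ((d1 + a) * s) * U s y \<le> exp ((d1 + a) * t) * U t y"
     "\<And>s. t - d < s \<Longrightarrow> s \<le> t \<Longrightarrow> exp ((d2 + b) * s) * V s y \<le> exp ((d2 + b) * t) * V t y"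
    "\<And>s. t - d < s \<Longrightarrow> s \<le> t \<Longrightarrow> 0 \<le> s"
    using zero_left[OF N t y(1,2)] by blast
  have Uty: "U t y = 0" using y by (simp add: U_in)
  have const: "U s y = U t y" if "t - d < s" "s \<le> t" for s
  proof -
    have "exp ((d1 + a) * s) * U s y \<le> 0" using d(2)[OF that] Uty by simp
    then have "U s y \<le> 0" by (simp add: mult_le_0_iff)
    moreover have "s \<in> {0..t}" using d(4)[OF that] that by auto
    then have "N s" using N by blast
    then have "0 \<le> U s y" by (simp add: N_def)
    ultimately show ?thesis using Uty by simp
  qed
  let ?I = "integral {g t..h t} (\<lambda>w. J1 (y - w) * u t w)"
  have "d1 * ?I - d1 * u t y - a * u t y + e * v t y = 0"
    by (rule deriv_const_left[OF dU[OF t y(1,2)] d(1) const])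
  then have eq: "d1 * ?I + e * v t y = 0" using y by simp
  have "0 \<le> ?I" using nonlocal_nonneg[OF Nt J1] by blast
  moreover have "0 \<le> v t y" using N_u[OF Nt] y by auto
  ultimately have "0 \<le> d1 * ?I" "0 \<le> e * v t y" using d1 e by simp_all
  then have "d1 * ?I = 0" using eq by linarith
  then have I0: "?I = 0" using d1 by simp
  have "?I > 0"
  proof (rule integral_pos[where y=z])
    have cJ: "continuous_on {g t..h t} (\<lambda>w. J1 (y - w))"
      by (rule continuous_on_compose2[OF J_cont[OF J1]]) (auto intro!: continuous_intros)
    show "continuous_on {g t..h t} (\<lambda>w. J1 (y - w) * u t w)"
      by (rule continuous_on_mult[OF cJ u_cont_on_interval(1)]) (use t in auto)
    show "0 \<le> J1 (y - w) * u t w" if "w \<in> {g t..h t}" for w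
      using that N_u[OF Nt] J_nonneg[OF J1] by auto
    show "z \<in> {g t..h t}" using z by auto
    have "J1 (y - z) > 0" using r z(3) by (simp add: abs_minus_commute)
    then show "J1 (y - z) * u t z > 0" using zpos by simp
    show "g t < h t" using z by auto
  qed
  then show False using I0 by simp
qed

lemma strict_pos:
  assumes N: "\<forall>\<tau>\<in>{0..t}. N \<tau>" and t: "t \<ge> 0" and x: "g t < x" "x < h t"
  shows "0 < u t x \<and> 0 < v t x"
proof (cases "t = 0")
  case True
  then show ?thesis using x u0_pos init[of x] h_0 g_0 by auto
next
  case False
  then have t: "t > 0" using t by auto
  have Nt: "N t" using N t by auto
  have hb: "h0 \<le> h \<tau>" "g \<tau> \<le> - h0" if "0 \<le> \<tau>" "\<tau> \<le> t" for \<tau> using N_bounds[OF N that] by auto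
  have u00: "0 < u t 0"
  proof -
    have "exp ((d1 + a) * 0) * U 0 0 \<le> exp ((d1 + a) * t) * U t 0"
    proof (rule lemmaA_u)
      fix \<tau> assume "0 < \<tau>" "\<tau> < t"
      then have "N \<tau>" "h0 \<le> h \<tau>" "g \<tau> \<le> - h0" using N hb[of \<tau>] by auto
      then show "N \<tau> \<and> g \<tau> < 0 \<and> 0 < h \<tau>" using h0 by auto
    qed (use t in auto)
    moreover have "U 0 0 = u0 0" using init[of 0] h0 h_0 g_0 by (simp add: U_in)
    moreover have "u0 0 > 0" using u0_pos h0 by auto
    ultimately have "0 < exp ((d1 + a) * t) * U t 0" by auto
    then have "0 < U t 0" by (simp add: zero_less_mult_iff)
    moreover have "U t 0 = u t 0" using hb[of t] t h0 by (simp add: U_in)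
    ultimately show ?thesis by simp
  qed
  obtain r where r: "r > 0" "\<And>z. \<bar>z\<bar> < r \<Longrightarrow> J1 z > 0" using J_pos_near0[OF J1] by blast
  have upos: "0 < u t x"
  proof (rule ccontr)
    assume "\<not> 0 < u t x"
    moreover have "0 \<le> u t x" using N_u[OF Nt] x by auto
    ultimately have ux: "u t x = 0" by simp
    define n :: nat where "n = nat \<lceil>2 * \<bar>x\<bar> / r\<rceil> + 1"
    have n: "n > 0" "\<bar>x\<bar> / n < r"
    proof -
      show "n > 0" by (simp add: n_def)
      have "2 * \<bar>x\<bar> / r \<le> n" unfolding n_def by linarith
      then have "2 * \<bar>x\<bar> \<le> n * r" using r(1) by (simp add: divide_le_eq)
      moreover have "0 < real n * r" using r(1) \<open>n > 0\<close> by simp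
      ultimately have "\<bar>x\<bar> < n * r" by linarith
      then show "\<bar>x\<bar> / n < r" using \<open>n > 0\<close> by (simp add: divide_less_eq mult.commute)
    qed
    define z where "z k = x - real k * x / real n" for k :: nat
    have zin: "g t < z k \<and> z k < h t" if "k \<le> n" for k
    proof -
      define c where "c = 1 - real k / n"
      have c: "0 \<le> c" "c \<le> 1" using that n by (auto simp: c_def)
      have zk: "z k = x * c" by (simp add: z_def c_def algebra_simps)
      have "min 0 x \<le> z k \<and> z k \<le> max 0 x"
      proof (cases "0 \<le> x")
        case True
        then have "x * c \<le> x" using c by (simp add: mult_left_le)
        then show ?thesis using True c zk by auto
      next
        case False
        then have "x \<le> x * c" using c by (simp add: mult_left_le_one_le mult_le_cancel_left1)
        moreover have "x * c \<le> 0" using False c by (simp add: mult_nonpos_nonneg)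
        ultimately show ?thesis using False zk by auto
      qed
      moreover have "g t < 0" "0 < h t" using hb[of t] t h0 by auto
      ultimately show ?thesis using x by auto
    qed
    have "u t (z k) = 0" if "k \<le> n" for k
      using that
    proof (induction k)
      case 0 then show ?case using ux by (simp add: z_def)
    next
      case (Suc k)
      then have IH: "u t (z k) = 0" by simp
      have "z (Suc k) - z k = - (x / n)" using n(1) by (simp add: z_def field_simps)
      then have "\<bar>z (Suc k) - z k\<bar> = \<bar>x\<bar> / n" by simp
      then have "\<bar>z (Suc k) - z k\<bar> < r" using n by simp
      then show ?case using zero_spread[OF N t _ _ IH r(2)] zin Suc.prems by auto
    qed
    from this[of n] have "u t 0 = 0" using n by (simp add: z_def)
    then show False using u00 by simp
  qed
  have vpos: "0 < v t x"
  proof (rule ccontr)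
    assume "\<not> 0 < v t x"
    moreover have "0 \<le> v t x" using N_u[OF Nt] x by auto
    ultimately have vx: "v t x = 0" by simp
    obtain d where d: "d > 0" "\<And>s. t - d < s \<Longrightarrow> s \<le> t \<Longrightarrow> exp ((d1 + a) * s) * U s x \<le> exp ((d1 + a) * t) * U t x"
      "\<And>s. t - d < s \<Longrightarrow> s \<le> t \<Longrightarrow> exp ((d2 + b) * s) * V s x \<le> exp ((d2 + b) * t) * V t x"
      "\<And>s. t - d < s \<Longrightarrow> s \<le> t \<Longrightarrow> 0 \<le> s"
      using zero_left[OF N t x] by blast
    have Vtx: "V t x = 0" using x vx by (simp add: V_in)
    have const: "V s x = V t x" if "t - d < s" "s \<le> t" for s
    proof -
      have "exp ((d2 + b) * s) * V s x \<le> 0" using d(3)[OF that] Vtx by simp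
      then have "V s x \<le> 0" by (simp add: mult_le_0_iff)
      moreover have "s \<in> {0..t}" using d(4)[OF that] that by auto
      then have "N s" using N by blast
      then have "0 \<le> V s x" by (simp add: N_def)
      ultimately show ?thesis using Vtx by simp
    qed
    let ?I = "integral {g t..h t} (\<lambda>w. J2 (x - w) * v t w)"
    have "d2 * ?I - d2 * v t x - b * v t x + G (u t x) = 0"
      by (rule deriv_const_left[OF dV[OF t x] d(1) const])
    then have eq: "d2 * ?I + G (u t x) = 0" using vx by simp
    have "0 \<le> ?I" using nonlocal_nonneg[OF Nt J2] by blast
    moreover have "0 < G (u t x)" using G_pos upos by blast
    moreover have "0 \<le> d2 * ?I" using \<open>0 \<le> ?I\<close> d2 by simp
    ultimately show False using eq by linarith
  qed
  show ?thesis using upos vpos by simp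
qed

end


lemma cont_eps:
  fixes f :: "'a::metric_space \<Rightarrow> real"
  assumes "continuous_on S f" "p \<in> S" "\<epsilon> > 0"
  obtains d where "d > 0" "\<And>q. q \<in> S \<Longrightarrow> dist q p < d \<Longrightarrow> \<bar>f q - f p\<bar> < \<epsilon>"
proof -
  from assms obtain d where "d > 0" "\<forall>q\<in>S. dist q p < d \<longrightarrow> dist (f q) (f p) < \<epsilon>"
    unfolding continuous_on_iff by blast
  then show ?thesis using that[of d] by (auto simp: dist_real_def)
qed

lemma compact_bound:
  fixes f :: "real \<Rightarrow> real"
  assumes "continuous_on {0..} f" "T \<ge> 0"
  obtains R where "R > 0" "\<And>t. t \<in> {0..T} \<Longrightarrow> \<bar>f t\<bar> \<le> R"
proof -
  have "compact (f ` {0..T})"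
    by (rule compact_continuous_image[OF continuous_on_subset[OF assms(1)]]) auto
  then have "bounded (f ` {0..T})" by (rule compact_imp_bounded)
  then obtain B where B: "\<forall>z\<in>f ` {0..T}. norm z \<le> B" unfolding bounded_iff by blast
  show ?thesis
  proof (rule that[of "max B 1"])
    show "max B 1 > 0" by simp
    fix t assume "t \<in> {0..T}"
    then have "norm (f t) \<le> B" using B by blast
    then show "\<bar>f t\<bar> \<le> max B 1" by simp
  qed
qed

context solP begin

lemma dom_bound:
  assumes "T \<ge> 0"
  obtains R where "R > 0" "\<And>t. t \<in> {0..T} \<Longrightarrow> - R \<le> g t \<and> h t \<le> R \<and> -R \<le> h t \<and> g t \<le> R"
proof -
  obtain R1 where R1: "R1 > 0" "\<And>t. t \<in> {0..T} \<Longrightarrow> \<bar>g t\<bar> \<le> R1" using compact_bound[OF g_cont assms] by blast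
  obtain R2 where R2: "R2 > 0" "\<And>t. t \<in> {0..T} \<Longrightarrow> \<bar>h t\<bar> \<le> R2" using compact_bound[OF h_cont assms] by blast
  show ?thesis
  proof (rule that[of "R1 + R2"])
    show "R1 + R2 > 0" using R1 R2 by simp
    fix t assume "t \<in> {0..T}"
    then have "\<bar>g t\<bar> \<le> R1" "\<bar>h t\<bar> \<le> R2" using R1 R2 by auto
    then show "- (R1 + R2) \<le> g t \<and> h t \<le> R1 + R2 \<and> - (R1 + R2) \<le> h t \<and> g t \<le> R1 + R2"
      using R1(1) R2(1) by linarith
  qed
qed

lemma conv_cont:
  assumes "cond_J J" and w: "continuous_on ({0..} \<times> UNIV) (\<lambda>(t, x). w t x)"
  shows "continuous_on ({0..} \<times> UNIV) (\<lambda>p. integral {-R..R} (\<lambda>y. J (snd p - y) * w (fst p) y))"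
proof -
  have "continuous_on (({0..} \<times> UNIV) \<times> cbox (-R) R) (\<lambda>(p, y). J (snd p - y) * w (fst p) y)"
  proof -
    have c1: "continuous_on (({0..} \<times> UNIV) \<times> cbox (-R) R) (\<lambda>q. J (snd (fst q) - snd q))"
      by (rule continuous_on_compose2[OF J_cont[OF assms(1)]]) (auto intro!: continuous_intros)
    have c2: "continuous_on (({0..} \<times> UNIV) \<times> cbox (-R) R) (\<lambda>q. w (fst (fst q)) (snd q))"
      by (rule continuous_on_compose2[OF w, of _ "\<lambda>q. (fst (fst q), snd q)", simplified])
         (auto intro!: continuous_intros)
    have "continuous_on (({0..} \<times> UNIV) \<times> cbox (-R) R) (\<lambda>q. J (snd (fst q) - snd q) * w (fst (fst q)) (snd q))"
      by (rule continuous_on_mult[OF c1 c2])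
    then show ?thesis by (simp add: case_prod_beta')
  qed
  from integral_continuous_on_param[OF this] show ?thesis by (simp add: cbox_interval)
qed

lemma conv_pos:
  assumes J: "cond_J J" and cw: "continuous_on UNIV w" and w0: "\<And>y. 0 \<le> w y"
    and wpos: "\<And>y. g t < y \<Longrightarrow> y < h t \<Longrightarrow> 0 < w y"
    and gh: "g t < h t" "-R \<le> g t" "h t \<le> R"
    and x: "x = g t \<or> x = h t"
  shows "0 < integral {-R..R} (\<lambda>y. J (x - y) * w y)"
proof -
  obtain r where r: "r > 0" "\<And>z. \<bar>z\<bar> < r \<Longrightarrow> J z > 0" using J_pos_near0[OF J] by blast
  define m where "m = min (r/2) ((h t - g t)/2)"
  have m: "0 < m" "m < r" "m < h t - g t" using r gh unfolding m_def min_def by auto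
  define y0 where "y0 = (if x = h t then h t - m else g t + m)"
  have y0: "g t < y0" "y0 < h t" "\<bar>x - y0\<bar> < r" using m x by (auto simp: y0_def)
  show ?thesis
  proof (rule integral_pos[where y=y0])
    have c1: "continuous_on {-R..R} (\<lambda>y. J (x - y))"
      by (rule continuous_on_compose2[OF J_cont[OF J]]) (auto intro!: continuous_intros)
    show "continuous_on {-R..R} (\<lambda>y. J (x - y) * w y)"
      by (rule continuous_on_mult[OF c1 continuous_on_subset[OF cw]]) auto
    show "0 \<le> J (x - y) * w y" for y using J_nonneg[OF J] w0 by simp
    show "y0 \<in> {-R..R}" using y0 gh by auto
    show "0 < J (x - y0) * w y0" using r(2)[OF y0(3)] wpos[OF y0(1,2)] by simp
    show "-R < R" using gh by auto
  qed
qed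

end


context solP begin

lemma continue:
  assumes N: "\<forall>\<tau>\<in>{0..t1}. N \<tau>" and t1: "t1 \<ge> 0"
  obtains \<eta> where "\<eta> > 0" "\<forall>\<tau>\<in>{t1..t1+\<eta>}. N \<tau>"
proof -
  define T1 where "T1 = t1 + 1"
  have T1: "T1 \<ge> 0" using t1 by (simp add: T1_def)
  obtain R where R: "R > 0" "\<And>t. t \<in> {0..T1} \<Longrightarrow> - R \<le> g t \<and> h t \<le> R \<and> -R \<le> h t \<and> g t \<le> R"
    using dom_bound[OF T1] by blast
  have Nt1: "N t1" using N t1 by auto
  have ghb: "h0 \<le> h t1" "g t1 \<le> - h0" using N_bounds[OF N t1 order_refl] by auto
  have gh1: "g t1 < h t1" using ghb h0 by linarith
  have t1T: "t1 \<in> {0..T1}" using t1 by (simp add: T1_def)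
  define F where "F p = integral {-R..R} (\<lambda>y. J1 (snd p - y) * U (fst p) y)" for p
  define F2 where "F2 p = integral {-R..R} (\<lambda>y. J2 (snd p - y) * V (fst p) y)" for p
  define \<Psi> where "\<Psi> p = min (d1 * F p - (d1 + a) * U (fst p) (snd p) + e * V (fst p) (snd p))
                              (d2 * F2 p - (d2 + b) * V (fst p) (snd p))" for p
  have cF: "continuous_on ({0..} \<times> UNIV) F" unfolding F_def by (rule conv_cont[OF J1 U_cont])
  have cF2: "continuous_on ({0..} \<times> UNIV) F2" unfolding F2_def by (rule conv_cont[OF J2 V_cont])
  have cU': "continuous_on ({0..} \<times> UNIV) (\<lambda>p. U (fst p) (snd p))" using U_cont by (simp add: case_prod_beta')
  have cV': "continuous_on ({0..} \<times> UNIV) (\<lambda>p. V (fst p) (snd p))" using V_cont by (simp add: case_prod_beta')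
  have c\<Psi>: "continuous_on ({0..} \<times> UNIV) \<Psi>" unfolding \<Psi>_def
    by (intro continuous_intros cF cF2 cU' cV')
  have \<Psi>pos: "\<Psi> (t1, xb) > 0" if xb: "xb = g t1 \<or> xb = h t1" for xb
  proof -
    have Rb: "-R \<le> g t1" "h t1 \<le> R" using R(2)[OF t1T] by auto
    have "0 < F (t1, xb)" unfolding F_def
      by (simp, rule conv_pos[OF J1 U_cont_x[OF t1]])
        (use Nt1 gh1 Rb xb strict_pos[OF N t1] in \<open>auto simp: N_def U_in\<close>)
    moreover have "0 < F2 (t1, xb)" unfolding F2_def
      by (simp, rule conv_pos[OF J2 V_cont_x[OF t1]])
        (use Nt1 gh1 Rb xb strict_pos[OF N t1] in \<open>auto simp: N_def V_in\<close>)
    moreover have "U t1 xb = 0" "V t1 xb = 0" using U_bd V_bd t1 xb by auto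
    ultimately show ?thesis unfolding \<Psi>_def using d1 d2 by simp
  qed
  obtain dR where dR: "dR > 0" "\<And>q. q \<in> {0..} \<times> UNIV \<Longrightarrow> dist q (t1, h t1) < dR \<Longrightarrow> \<bar>\<Psi> q - \<Psi> (t1, h t1)\<bar> < \<Psi> (t1, h t1)"
    using cont_eps[OF c\<Psi> _ \<Psi>pos[of "h t1"]] t1 by (metis mem_Times_iff UNIV_I atLeast_iff fst_conv snd_conv)
  obtain dL where dL: "dL > 0" "\<And>q. q \<in> {0..} \<times> UNIV \<Longrightarrow> dist q (t1, g t1) < dL \<Longrightarrow> \<bar>\<Psi> q - \<Psi> (t1, g t1)\<bar> < \<Psi> (t1, g t1)"
    using cont_eps[OF c\<Psi> _ \<Psi>pos[of "g t1"]] t1 by (metis mem_Times_iff UNIV_I atLeast_iff fst_conv snd_conv)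
  define d where "d = min dR dL"
  have d: "d > 0" "d \<le> dR" "d \<le> dL" using dR dL by (auto simp: d_def)
  define \<rho>0 where "\<rho>0 = min (d/4) ((h t1 - g t1)/4)"
  have \<rho>0: "\<rho>0 > 0" "\<rho>0 \<le> d/4" "\<rho>0 \<le> (h t1 - g t1)/4" using d gh1 unfolding \<rho>0_def min_def by auto
  define K where "K = {g t1 + \<rho>0 .. h t1 - \<rho>0}"
  define w where "w x = min (U t1 x) (V t1 x)" for x
  have Kne: "K \<noteq> {}" using \<rho>0 gh1 by (auto simp: K_def)
  have cw: "continuous_on K w" unfolding w_def
    by (intro continuous_intros continuous_on_subset[OF U_cont_x[OF t1]] continuous_on_subset[OF V_cont_x[OF t1]]) auto
  obtain xm where xm: "xm \<in> K" "\<And>y. y \<in> K \<Longrightarrow> w xm \<le> w y"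
    using continuous_attains_inf[OF compact_Icc[of "g t1 + \<rho>0" "h t1 - \<rho>0", folded K_def] Kne cw] by blast
  define m where "m = w xm"
  have m: "m > 0"
  proof -
    have "g t1 < xm" "xm < h t1" using xm(1) \<rho>0 by (auto simp: K_def)
    then have "0 < u t1 xm" "0 < v t1 xm" "U t1 xm = u t1 xm" "V t1 xm = v t1 xm"
      using strict_pos[OF N t1] by (auto simp: U_in V_in)
    then show ?thesis by (simp add: m_def w_def)
  qed
  define S where "S = {t1..T1} \<times> {-R..R}"
  have cS: "compact S" unfolding S_def by (intro compact_Times compact_Icc)
  have S0: "S \<subseteq> {0..} \<times> UNIV" using t1 by (auto simp: S_def)
  have "uniformly_continuous_on S (\<lambda>p. U (fst p) (snd p))"
    by (rule compact_uniformly_continuous[OF continuous_on_subset[OF cU' S0] cS])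
  then obtain dUc where dUc: "dUc > 0" "\<And>p q. p \<in> S \<Longrightarrow> q \<in> S \<Longrightarrow> dist q p < dUc \<Longrightarrow> dist (U (fst q) (snd q)) (U (fst p) (snd p)) < m"
    unfolding uniformly_continuous_on_def using m by metis
  have "uniformly_continuous_on S (\<lambda>p. V (fst p) (snd p))"
    by (rule compact_uniformly_continuous[OF continuous_on_subset[OF cV' S0] cS])
  then obtain dVc where dVc: "dVc > 0" "\<And>p q. p \<in> S \<Longrightarrow> q \<in> S \<Longrightarrow> dist q p < dVc \<Longrightarrow> dist (V (fst q) (snd q)) (V (fst p) (snd p)) < m"
    unfolding uniformly_continuous_on_def using m by metis
  obtain dg where dg: "dg > 0" "\<And>s. s \<in> {0..} \<Longrightarrow> dist s t1 < dg \<Longrightarrow> \<bar>g s - g t1\<bar> < \<rho>0"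
    using cont_eps[OF g_cont _ \<rho>0(1)] t1 by auto
  obtain dh where dh: "dh > 0" "\<And>s. s \<in> {0..} \<Longrightarrow> dist s t1 < dh \<Longrightarrow> \<bar>h s - h t1\<bar> < \<rho>0"
    using cont_eps[OF h_cont _ \<rho>0(1)] t1 by auto
  define \<eta> where "\<eta> = min (min 1 (d/2)) (min (min dUc dVc) (min dg dh)) / 2"
  have \<eta>: "\<eta> > 0" "\<eta> < 1" "\<eta> < d/2" "\<eta> < dUc" "\<eta> < dVc" "\<eta> < dg" "\<eta> < dh"
    using d dUc dVc dg dh unfolding \<eta>_def min_def by auto
  have win: "s \<in> {0..T1}" "\<bar>g s - g t1\<bar> < \<rho>0" "\<bar>h s - h t1\<bar> < \<rho>0" if "s \<in> {t1..t1+\<eta>}" for s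
  proof -
    show "s \<in> {0..T1}" using that t1 \<eta> by (auto simp: T1_def)
    have "dist s t1 < dg" "dist s t1 < dh" using that \<eta> by (auto simp: dist_real_def)
    then show "\<bar>g s - g t1\<bar> < \<rho>0" "\<bar>h s - h t1\<bar> < \<rho>0" using dg dh that t1 by auto
  qed
  have derU: "((\<lambda>s. U s x) has_real_derivative (d1 * F (s, x) - (d1 + a) * U s x + e * V s x)) (at s)"
    if "s > 0" "s \<in> {0..T1}" "g s < x" "x < h s" for s x
  proof -
    have Rb: "-R \<le> g s" "h s \<le> R" using R(2)[OF that(2)] by auto
    have "integral {g s..h s} (\<lambda>y. J1 (x - y) * u s y) = F (s, x)"
      unfolding F_def using int_ext(1)[OF Rb, of "\<lambda>y. J1 (x - y)"] by simp
    moreover have "U s x = u s x" "V s x = v s x" using that by (auto simp: U_in V_in)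
    ultimately show ?thesis using dU[OF that(1,3,4)] by (simp add: algebra_simps)
  qed
  have derV: "((\<lambda>s. V s x) has_real_derivative (d2 * F2 (s, x) - (d2 + b) * V s x + G (U s x))) (at s)"
    if "s > 0" "s \<in> {0..T1}" "g s < x" "x < h s" for s x
  proof -
    have Rb: "-R \<le> g s" "h s \<le> R" using R(2)[OF that(2)] by auto
    have "integral {g s..h s} (\<lambda>y. J2 (x - y) * v s y) = F2 (s, x)"
      unfolding F2_def using int_ext(2)[OF Rb, of "\<lambda>y. J2 (x - y)"] by simp
    moreover have "U s x = u s x" "V s x = v s x" using that by (auto simp: U_in V_in)
    ultimately show ?thesis using dV[OF that(1,3,4)] by (simp add: algebra_simps)
  qed
  have near: "\<Psi> (s, x) > 0"
    if ns: "s \<in> {t1..t1+\<eta>}" "g s < x" "x < h s" "\<not> (g t1 + \<rho>0 \<le> x \<and> x \<le> h t1 - \<rho>0)" for s x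
  proof -
    have sw: "\<bar>g s - g t1\<bar> < \<rho>0" "\<bar>h s - h t1\<bar> < \<rho>0" using win[OF ns(1)] by auto
    have s0: "(s, x) \<in> {0..} \<times> UNIV" using ns(1) t1 by auto
    have st: "\<bar>s - t1\<bar> < d/2" using ns(1) \<eta> by auto
    consider "h t1 - \<rho>0 < x" | "x < g t1 + \<rho>0" using ns(4) by linarith
    then show ?thesis
    proof cases
      case 1
      moreover have "h s - h t1 < \<rho>0" using sw(2) by (simp add: abs_less_iff)
      ultimately have "\<bar>x - h t1\<bar> < d/2" using ns(3) \<rho>0 unfolding abs_less_iff by linarith
      then have "dist (s, x) (t1, h t1) < dR" using dist_pair_lt[OF st] d by force
      then show ?thesis using dR(2)[OF s0] by auto
    next
      case 2
      moreover have "g t1 - g s < \<rho>0" using sw(1) by (simp add: abs_less_iff)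
      ultimately have "\<bar>x - g t1\<bar> < d/2" using ns(2) \<rho>0 unfolding abs_less_iff by linarith
      then have "dist (s, x) (t1, g t1) < dL" using dist_pair_lt[OF st] d by force
      then show ?thesis using dL(2)[OF s0] by auto
    qed
  qed
  have midU: "0 < U s x" if "s \<in> {t1..t1+\<eta>}" "g t1 + \<rho>0 \<le> x" "x \<le> h t1 - \<rho>0" for s x
  proof -
    have xK: "x \<in> K" using that by (auto simp: K_def)
    have xR: "x \<in> {-R..R}" using that R(2)[OF t1T] \<rho>0 by auto
    have "(t1, x) \<in> S" "(s, x) \<in> S" using xR that t1 \<eta> by (auto simp: S_def T1_def)
    moreover have "dist (s, x) (t1, x) < dUc" using that \<eta> by (auto simp: dist_Pair_Pair dist_real_def)
    ultimately have "dist (U s x) (U t1 x) < m" using dUc(2) by fastforce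
    moreover have "m \<le> U t1 x" using xm(2)[OF xK] by (simp add: m_def w_def)
    ultimately show ?thesis by (auto simp: dist_real_def)
  qed
  have midV: "0 < V s x" if "s \<in> {t1..t1+\<eta>}" "g t1 + \<rho>0 \<le> x" "x \<le> h t1 - \<rho>0" for s x
  proof -
    have xK: "x \<in> K" using that by (auto simp: K_def)
    have xR: "x \<in> {-R..R}" using that R(2)[OF t1T] \<rho>0 by auto
    have "(t1, x) \<in> S" "(s, x) \<in> S" using xR that t1 \<eta> by (auto simp: S_def T1_def)
    moreover have "dist (s, x) (t1, x) < dVc" using that \<eta> by (auto simp: dist_Pair_Pair dist_real_def)
    ultimately have "dist (V s x) (V t1 x) < m" using dVc(2) by fastforce
    moreover have "m \<le> V t1 x" using xm(2)[OF xK] by (simp add: m_def w_def)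
    ultimately show ?thesis by (auto simp: dist_real_def)
  qed
  have outside: "U s x = 0 \<and> V s x = 0" if "s \<ge> 0" "\<not> (g s < x \<and> x < h s)" for s x
  proof (cases "g s \<le> x \<and> x \<le> h s")
    case True
    then have "x = g s \<or> x = h s" using that by auto
    then show ?thesis using U_bd V_bd that by auto
  next
    case False then show ?thesis by (simp add: U_out V_out)
  qed
  have Uclaim: "0 \<le> U \<tau> x" if \<tau>: "\<tau> \<in> {t1..t1+\<eta>}" for \<tau> x
  proof (cases "g \<tau> < x \<and> x < h \<tau>")
    case False then show ?thesis using outside[of \<tau> x] \<tau> t1 by auto
  next
    case True
    show ?thesis
    proof (cases "g t1 + \<rho>0 \<le> x \<and> x \<le> h t1 - \<rho>0")
      case True then have "0 < U \<tau> x" using midU[OF \<tau>] by blast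
      then show ?thesis by simp
    next
      case notmid: False
      show ?thesis
      proof (rule push[where \<phi>="\<lambda>s. U s x" and \<alpha>=t1])
        show "t1 \<le> \<tau>" using \<tau> by auto
        show "continuous_on {t1..\<tau>} (\<lambda>s. U s x)" by (rule continuous_on_subset[OF U_cont_t]) (use t1 in auto)
        show "0 \<le> U t1 x" using Nt1 by (simp add: N_def)
        fix s assume s: "t1 < s" "s < \<tau>" "U s x < 0"
        have sw: "s \<in> {t1..t1+\<eta>}" using s \<tau> by auto
        have int: "g s < x" "x < h s" using outside[of s x] s t1 by auto
        have "\<Psi> (s, x) > 0" using near[OF sw int notmid] .
        then have "0 < d1 * F (s, x) - (d1 + a) * U s x + e * V s x" by (simp add: \<Psi>_def)
        moreover have "s > 0" using s t1 by auto
        ultimately show "\<exists>D. ((\<lambda>s. U s x) has_real_derivative D) (at s) \<and> 0 \<le> D"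
          using derU[OF _ win(1)[OF sw] int] by (intro exI conjI) auto
      qed
    qed
  qed
  have Vclaim: "0 \<le> V \<tau> x" if \<tau>: "\<tau> \<in> {t1..t1+\<eta>}" for \<tau> x
  proof (cases "g \<tau> < x \<and> x < h \<tau>")
    case False then show ?thesis using outside[of \<tau> x] \<tau> t1 by auto
  next
    case True
    show ?thesis
    proof (cases "g t1 + \<rho>0 \<le> x \<and> x \<le> h t1 - \<rho>0")
      case True then have "0 < V \<tau> x" using midV[OF \<tau>] by blast
      then show ?thesis by simp
    next
      case notmid: False
      show ?thesis
      proof (rule push[where \<phi>="\<lambda>s. V s x" and \<alpha>=t1])
        show "t1 \<le> \<tau>" using \<tau> by auto
        show "continuous_on {t1..\<tau>} (\<lambda>s. V s x)" by (rule continuous_on_subset[OF V_cont_t]) (use t1 in auto)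
        show "0 \<le> V t1 x" using Nt1 by (simp add: N_def)
        fix s assume s: "t1 < s" "s < \<tau>" "V s x < 0"
        have sw: "s \<in> {t1..t1+\<eta>}" using s \<tau> by auto
        have int: "g s < x" "x < h s" using outside[of s x] s t1 by auto
        have "\<Psi> (s, x) > 0" using near[OF sw int notmid] .
        then have "0 < d2 * F2 (s, x) - (d2 + b) * V s x" by (simp add: \<Psi>_def)
        moreover have "0 \<le> G (U s x)" using G_nonneg Uclaim[OF sw] by blast
        moreover have "s > 0" using s t1 by auto
        ultimately show "\<exists>D. ((\<lambda>s. V s x) has_real_derivative D) (at s) \<and> 0 \<le> D"
          using derV[OF _ win(1)[OF sw] int] by (intro exI[of _ "d2 * F2 (s, x) - (d2 + b) * V s x + G (U s x)"] conjI) auto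
      qed
    qed
  qed
  show ?thesis
    by (rule that[OF \<eta>(1)]) (use Uclaim Vclaim in \<open>auto simp: N_def\<close>)
qed

end


context solP begin

lemma N_0: "N 0"
  unfolding N_def
proof
  fix x
  show "0 \<le> U 0 x \<and> 0 \<le> V 0 x"
  proof (cases "g 0 \<le> x \<and> x \<le> h 0")
    case True
    then have "x \<in> {-h0..h0}" using h_0 g_0 by auto
    then show ?thesis using True init u0_nonneg by (simp add: U_in V_in)
  next
    case False then show ?thesis by (simp add: U_out V_out)
  qed
qed

lemma N_all: "t \<ge> 0 \<Longrightarrow> N t"
proof (rule ccontr)
  fix t0 assume t0: "t0 \<ge> 0" "\<not> N t0"
  define S where "S = {\<tau> \<in> {0..t0}. \<forall>s\<in>{0..\<tau>}. N s}"
  have S0: "0 \<in> S" using N_0 t0 by (auto simp: S_def)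
  have Sne: "S \<noteq> {}" using S0 by auto
  have Sbdd: "bdd_above S" by (rule bdd_aboveI[of _ t0]) (auto simp: S_def)
  define t1 where "t1 = Sup S"
  have t1: "0 \<le> t1" "t1 \<le> t0"
    using cSup_upper[OF S0 Sbdd] cSup_least[OF Sne, of t0] by (auto simp: t1_def S_def)
  have below: "N s" if "0 \<le> s" "s < t1" for s
  proof -
    have "s < Sup S" using that by (simp add: t1_def)
    then obtain \<tau> where "\<tau> \<in> S" "s < \<tau>" using less_cSup_iff[OF Sne Sbdd] by blast
    then show ?thesis using that by (auto simp: S_def)
  qed
  have Nt1: "N t1"
  proof (cases "t1 = 0")
    case True then show ?thesis using N_0 by simp
  next
    case False
    then have t1p: "t1 > 0" using t1 by auto
    show ?thesis unfolding N_def
    proof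
      fix x
      have "0 \<le> U t1 x"
        by (rule left_limit_nonneg[OF U_cont_t t1p]) (use below in \<open>auto simp: N_def\<close>)
      moreover have "0 \<le> V t1 x"
        by (rule left_limit_nonneg[OF V_cont_t t1p]) (use below in \<open>auto simp: N_def\<close>)
      ultimately show "0 \<le> U t1 x \<and> 0 \<le> V t1 x" by simp
    qed
  qed
  have Nupto: "\<forall>\<tau>\<in>{0..t1}. N \<tau>"
  proof
    fix \<tau> assume "\<tau> \<in> {0..t1}"
    then show "N \<tau>" using below Nt1 by (cases "\<tau> = t1") auto
  qed
  obtain \<eta> where \<eta>: "\<eta> > 0" "\<forall>\<tau>\<in>{t1..t1+\<eta>}. N \<tau>" using continue[OF Nupto t1(1)] by blast
  have Nall: "N \<tau>" if "\<tau> \<in> {0..t1+\<eta>}" for \<tau>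
  proof (cases "\<tau> \<le> t1")
    case True then show ?thesis using Nupto that by auto
  next
    case False then show ?thesis using \<eta>(2) that by auto
  qed
  show False
  proof (cases "t0 \<le> t1 + \<eta>")
    case True then show False using Nall[of t0] t0 by auto
  next
    case False
    then have "t1 + \<eta> \<in> S" using Nall t1 \<eta>(1) by (auto simp: S_def)
    then have "t1 + \<eta> \<le> t1" unfolding t1_def by (rule cSup_upper[OF _ Sbdd])
    then show False using \<eta>(1) by simp
  qed
qed

lemma N_upto: "\<forall>\<tau>\<in>{0..t}. N \<tau>" using N_all by auto

lemma U_nonneg: "t \<ge> 0 \<Longrightarrow> 0 \<le> U t x" and V_nonneg: "t \<ge> 0 \<Longrightarrow> 0 \<le> V t x"
  using N_all by (auto simp: N_def)

lemma uv_nonneg: "t \<ge> 0 \<Longrightarrow> g t \<le> x \<Longrightarrow> x \<le> h t \<Longrightarrow> 0 \<le> u t x \<and> 0 \<le> v t x"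
  using N_u N_all by blast

lemma h_mono: "0 \<le> s \<Longrightarrow> s \<le> t \<Longrightarrow> h s \<le> h t" and g_mono: "0 \<le> s \<Longrightarrow> s \<le> t \<Longrightarrow> g t \<le> g s"
  using mono_N[of s t] N_all by auto

lemma h_ge: "t \<ge> 0 \<Longrightarrow> h0 \<le> h t" and g_le: "t \<ge> 0 \<Longrightarrow> g t \<le> - h0"
  using h_mono[of 0 t] g_mono[of 0 t] h_0 g_0 by auto

lemma pos_all: "t \<ge> 0 \<Longrightarrow> g t < x \<Longrightarrow> x < h t \<Longrightarrow> 0 < u t x \<and> 0 < v t x"
  using strict_pos[OF N_upto] by blast

end


context solP begin

lemma Wint:
  assumes "t \<ge> 0"
  shows "(\<lambda>x. u t x * W_J J1 (h t - x) + \<rho> * v t x * W (h t - x)) integrable_on {g t..h t}"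
    and "(\<lambda>x. u t x * W_J J1 (h t - x)) integrable_on {g t..h t}"
    and "(\<lambda>x. u t x * W_J J1 (x - g t) + \<rho> * v t x * W (x - g t)) integrable_on {g t..h t}"
    and "(\<lambda>x. u t x * W_J J1 (x - g t)) integrable_on {g t..h t}"
proof -
  have cu: "continuous_on {g t..h t} (u t)" "continuous_on {g t..h t} (v t)"
    using u_cont_on_interval[OF assms] by auto
  have cWJ1: "continuous_on {g t..h t} (\<lambda>x. W_J J1 (h t - x))"
    by (rule continuous_on_compose2[OF W_J_cont[OF J1]]) (auto intro!: continuous_intros)
  have cWJ2: "continuous_on {g t..h t} (\<lambda>x. W_J J1 (x - g t))"
    by (rule continuous_on_compose2[OF W_J_cont[OF J1]]) (auto intro!: continuous_intros)
  have cW1: "continuous_on {g t..h t} (\<lambda>x. W (h t - x))"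
  proof (rule continuous_on_eq)
    show "continuous_on {g t..h t} (\<lambda>x. Wc W (h t - x))"
      by (rule continuous_on_compose2[OF W_props(2)[OF W]]) (auto intro!: continuous_intros)
  qed (auto simp: W_props(3)[OF W])
  have cW2: "continuous_on {g t..h t} (\<lambda>x. W (x - g t))"
  proof (rule continuous_on_eq)
    show "continuous_on {g t..h t} (\<lambda>x. Wc W (x - g t))"
      by (rule continuous_on_compose2[OF W_props(2)[OF W]]) (auto intro!: continuous_intros)
  qed (auto simp: W_props(3)[OF W])
  show "(\<lambda>x. u t x * W_J J1 (h t - x) + \<rho> * v t x * W (h t - x)) integrable_on {g t..h t}"
    by (rule integrable_continuous_interval) (intro continuous_intros cu cWJ1 cW1)
  show "(\<lambda>x. u t x * W_J J1 (h t - x)) integrable_on {g t..h t}"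
    by (rule integrable_continuous_interval) (intro continuous_intros cu cWJ1)
  show "(\<lambda>x. u t x * W_J J1 (x - g t) + \<rho> * v t x * W (x - g t)) integrable_on {g t..h t}"
    by (rule integrable_continuous_interval) (intro continuous_intros cu cWJ2 cW2)
  show "(\<lambda>x. u t x * W_J J1 (x - g t)) integrable_on {g t..h t}"
    by (rule integrable_continuous_interval) (intro continuous_intros cu cWJ2)
qed

lemma speed:
  assumes T: "T \<ge> 0"
  obtains \<delta> where "\<delta> > 0" "\<And>s t. 0 \<le> s \<Longrightarrow> s \<le> t \<Longrightarrow> t \<le> T \<Longrightarrow> \<delta> * (t - s) \<le> h t - h s"
    "\<And>s t. 0 \<le> s \<Longrightarrow> s \<le> t \<Longrightarrow> t \<le> T \<Longrightarrow> \<delta> * (t - s) \<le> g s - g t"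
proof -
  obtain R where R: "R > 0" "\<And>t. t \<in> {0..T} \<Longrightarrow> - R \<le> g t \<and> h t \<le> R \<and> -R \<le> h t \<and> g t \<le> R"
    using dom_bound[OF T] by blast
  define Ih where "Ih \<tau> = integral {-R..R} (\<lambda>x. W_J J1 (h \<tau> - x) * U \<tau> x)" for \<tau>
  define Ig where "Ig \<tau> = integral {-R..R} (\<lambda>x. W_J J1 (x - g \<tau>) * U \<tau> x)" for \<tau>
  have cUT: "continuous_on ({0..T} \<times> {-R..R}) (\<lambda>p. U (fst p) (snd p))"
    by (rule continuous_on_subset[OF U_cont[unfolded case_prod_beta']]) auto
  have chT: "continuous_on ({0..T} \<times> {-R..R}) (\<lambda>p. h (fst p))"
    by (rule continuous_on_compose2[OF h_cont continuous_on_fst]) auto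
  have cgT: "continuous_on ({0..T} \<times> {-R..R}) (\<lambda>p. g (fst p))"
    by (rule continuous_on_compose2[OF g_cont continuous_on_fst]) auto
  have cIh: "continuous_on {0..T} Ih"
  proof -
    have "continuous_on ({0..T} \<times> {-R..R}) (\<lambda>p. W_J J1 (h (fst p) - snd p))"
      by (rule continuous_on_compose2[OF W_J_cont[OF J1]]) (auto intro!: continuous_intros chT)
    then have "continuous_on ({0..T} \<times> {-R..R}) (\<lambda>(\<tau>, x). W_J J1 (h \<tau> - x) * U \<tau> x)"
      using continuous_on_mult[OF _ cUT] by (simp add: case_prod_beta')
    from integral_continuous_on_param[of "{0..T}" "-R" R, unfolded cbox_interval, OF this] show ?thesis by (simp add: Ih_def cbox_interval)
  qed
  have cIg: "continuous_on {0..T} Ig"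
  proof -
    have "continuous_on ({0..T} \<times> {-R..R}) (\<lambda>p. W_J J1 (snd p - g (fst p)))"
      by (rule continuous_on_compose2[OF W_J_cont[OF J1]]) (auto intro!: continuous_intros cgT)
    then have "continuous_on ({0..T} \<times> {-R..R}) (\<lambda>(\<tau>, x). W_J J1 (x - g \<tau>) * U \<tau> x)"
      using continuous_on_mult[OF _ cUT] by (simp add: case_prod_beta')
    from integral_continuous_on_param[of "{0..T}" "-R" R, unfolded cbox_interval, OF this] show ?thesis by (simp add: Ig_def cbox_interval)
  qed
  obtain r where r: "r > 0" "\<And>y. y < r \<Longrightarrow> W_J J1 y > 0" using W_J_pos[OF J1] by blast
  have Ipos: "0 < Ih \<tau> \<and> 0 < Ig \<tau>" if \<tau>: "\<tau> \<in> {0..T}" for \<tau>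
  proof -
    have t0: "\<tau> \<ge> 0" using \<tau> by auto
    have gh: "g \<tau> < h \<tau>" using h_ge[OF t0] g_le[OF t0] h0 by linarith
    have Rb: "-R \<le> g \<tau>" "h \<tau> \<le> R" using R(2)[OF \<tau>] by auto
    define m where "m = min (r/2) ((h \<tau> - g \<tau>)/2)"
    have m: "0 < m" "m < r" "m < h \<tau> - g \<tau>" using r gh unfolding m_def min_def by auto
    have cU: "continuous_on {-R..R} (U \<tau>)" using continuous_on_subset[OF U_cont_x[OF t0]] by auto
    have "0 < Ih \<tau>" unfolding Ih_def
    proof (rule integral_pos[where y="h \<tau> - m"])
      have "continuous_on {-R..R} (\<lambda>x. W_J J1 (h \<tau> - x))"
        by (rule continuous_on_compose2[OF W_J_cont[OF J1]]) (auto intro!: continuous_intros)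
      then show "continuous_on {-R..R} (\<lambda>x. W_J J1 (h \<tau> - x) * U \<tau> x)"
        using cU by (intro continuous_intros)
      show "0 \<le> W_J J1 (h \<tau> - x) * U \<tau> x" for x using W_J_nonneg[OF J1] U_nonneg[OF t0] by simp
      show "h \<tau> - m \<in> {-R..R}" using m Rb by auto
      have "U \<tau> (h \<tau> - m) = u \<tau> (h \<tau> - m)" using m by (simp add: U_in)
      moreover have "0 < u \<tau> (h \<tau> - m)" using pos_all[OF t0] m by auto
      moreover have "0 < W_J J1 (h \<tau> - (h \<tau> - m))" using r m by simp
      ultimately show "0 < W_J J1 (h \<tau> - (h \<tau> - m)) * U \<tau> (h \<tau> - m)" by simp
      show "-R < R" using R by simp
    qed
    moreover have "0 < Ig \<tau>" unfolding Ig_def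
    proof (rule integral_pos[where y="g \<tau> + m"])
      have "continuous_on {-R..R} (\<lambda>x. W_J J1 (x - g \<tau>))"
        by (rule continuous_on_compose2[OF W_J_cont[OF J1]]) (auto intro!: continuous_intros)
      then show "continuous_on {-R..R} (\<lambda>x. W_J J1 (x - g \<tau>) * U \<tau> x)"
        using cU by (intro continuous_intros)
      show "0 \<le> W_J J1 (x - g \<tau>) * U \<tau> x" for x using W_J_nonneg[OF J1] U_nonneg[OF t0] by simp
      show "g \<tau> + m \<in> {-R..R}" using m Rb by auto
      have "U \<tau> (g \<tau> + m) = u \<tau> (g \<tau> + m)" using m by (simp add: U_in)
      moreover have "0 < u \<tau> (g \<tau> + m)" using pos_all[OF t0] m by auto
      moreover have "0 < W_J J1 (g \<tau> + m - g \<tau>)" using r m by simp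
      ultimately show "0 < W_J J1 (g \<tau> + m - g \<tau>) * U \<tau> (g \<tau> + m)" by simp
      show "-R < R" using R by simp
    qed
    ultimately show ?thesis by simp
  qed
  have cmin: "continuous_on {0..T} (\<lambda>\<tau>. min (Ih \<tau>) (Ig \<tau>))" by (intro continuous_intros cIh cIg)
  obtain \<tau>m where \<tau>m: "\<tau>m \<in> {0..T}" "\<And>\<tau>. \<tau> \<in> {0..T} \<Longrightarrow> min (Ih \<tau>m) (Ig \<tau>m) \<le> min (Ih \<tau>) (Ig \<tau>)"
    using continuous_attains_inf[OF compact_Icc _ cmin] T by auto
  define m0 where "m0 = min (Ih \<tau>m) (Ig \<tau>m)"
  have m0: "m0 > 0" using Ipos[OF \<tau>m(1)] by (simp add: m0_def)
  have lowh: "\<mu> * m0 \<le> \<mu> * integral {g \<tau>..h \<tau>} (\<lambda>x. u \<tau> x * W_J J1 (h \<tau> - x) + \<rho> * v \<tau> x * W (h \<tau> - x))"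
    and lowg: "\<mu> * m0 \<le> \<mu> * integral {g \<tau>..h \<tau>} (\<lambda>x. u \<tau> x * W_J J1 (x - g \<tau>) + \<rho> * v \<tau> x * W (x - g \<tau>))"
    if \<tau>: "\<tau> \<in> {0..T}" for \<tau>
  proof -
    have t0: "\<tau> \<ge> 0" using \<tau> by auto
    have Rb: "-R \<le> g \<tau>" "h \<tau> \<le> R" using R(2)[OF \<tau>] by auto
    have eqh: "integral {g \<tau>..h \<tau>} (\<lambda>x. u \<tau> x * W_J J1 (h \<tau> - x)) = Ih \<tau>"
      unfolding Ih_def using int_ext(1)[OF Rb, of "\<lambda>x. W_J J1 (h \<tau> - x)"] by (simp add: mult.commute)
    have eqg: "integral {g \<tau>..h \<tau>} (\<lambda>x. u \<tau> x * W_J J1 (x - g \<tau>)) = Ig \<tau>"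
      unfolding Ig_def using int_ext(1)[OF Rb, of "\<lambda>x. W_J J1 (x - g \<tau>)"] by (simp add: mult.commute)
    have "m0 \<le> Ih \<tau>" "m0 \<le> Ig \<tau>" using \<tau>m(2)[OF \<tau>] by (auto simp: m0_def)
    moreover have "integral {g \<tau>..h \<tau>} (\<lambda>x. u \<tau> x * W_J J1 (h \<tau> - x))
        \<le> integral {g \<tau>..h \<tau>} (\<lambda>x. u \<tau> x * W_J J1 (h \<tau> - x) + \<rho> * v \<tau> x * W (h \<tau> - x))"
    proof (rule integral_le[OF Wint(2)[OF t0] Wint(1)[OF t0]])
      fix x assume "x \<in> {g \<tau>..h \<tau>}"
      then have "0 \<le> v \<tau> x" "0 \<le> W (h \<tau> - x)" using uv_nonneg[OF t0] W unfolding cond_W_def by auto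
      then show "u \<tau> x * W_J J1 (h \<tau> - x) \<le> u \<tau> x * W_J J1 (h \<tau> - x) + \<rho> * v \<tau> x * W (h \<tau> - x)"
        using rho by simp
    qed
    moreover have "integral {g \<tau>..h \<tau>} (\<lambda>x. u \<tau> x * W_J J1 (x - g \<tau>))
        \<le> integral {g \<tau>..h \<tau>} (\<lambda>x. u \<tau> x * W_J J1 (x - g \<tau>) + \<rho> * v \<tau> x * W (x - g \<tau>))"
    proof (rule integral_le[OF Wint(4)[OF t0] Wint(3)[OF t0]])
      fix x assume "x \<in> {g \<tau>..h \<tau>}"
      then have "0 \<le> v \<tau> x" "0 \<le> W (x - g \<tau>)" using uv_nonneg[OF t0] W unfolding cond_W_def by auto
      then show "u \<tau> x * W_J J1 (x - g \<tau>) \<le> u \<tau> x * W_J J1 (x - g \<tau>) + \<rho> * v \<tau> x * W (x - g \<tau>)"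
        using rho by simp
    qed
    ultimately show "\<mu> * m0 \<le> \<mu> * integral {g \<tau>..h \<tau>} (\<lambda>x. u \<tau> x * W_J J1 (h \<tau> - x) + \<rho> * v \<tau> x * W (h \<tau> - x))"
      "\<mu> * m0 \<le> \<mu> * integral {g \<tau>..h \<tau>} (\<lambda>x. u \<tau> x * W_J J1 (x - g \<tau>) + \<rho> * v \<tau> x * W (x - g \<tau>))"
      using eqh eqg mu by (auto intro!: mult_left_mono)
  qed
  show ?thesis
  proof (rule that[of "\<mu> * m0"])
    show "\<mu> * m0 > 0" using mu m0 by simp
    fix s t assume st: "0 \<le> s" "s \<le> t" "t \<le> T"
    show "\<mu> * m0 * (t - s) \<le> h t - h s"
    proof (rule mvt_lower[where f'="\<lambda>\<tau>. \<mu> * integral {g \<tau>..h \<tau>} (\<lambda>x. u \<tau> x * W_J J1 (h \<tau> - x) + \<rho> * v \<tau> x * W (h \<tau> - x))"])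
      show "continuous_on {s..t} h" by (rule continuous_on_subset[OF h_cont]) (use st in auto)
      fix \<tau> assume "s < \<tau>" "\<tau> < t"
      then show "(h has_real_derivative \<mu> * integral {g \<tau>..h \<tau>} (\<lambda>x. u \<tau> x * W_J J1 (h \<tau> - x) + \<rho> * v \<tau> x * W (h \<tau> - x))) (at \<tau>)"
        "\<mu> * m0 \<le> \<mu> * integral {g \<tau>..h \<tau>} (\<lambda>x. u \<tau> x * W_J J1 (h \<tau> - x) + \<rho> * v \<tau> x * W (h \<tau> - x))"
        using dh lowh st by auto
    qed (use st in auto)
    have "g t - g s \<le> (- (\<mu> * m0)) * (t - s)"
    proof (rule mvt_upper[where f'="\<lambda>\<tau>. - \<mu> * integral {g \<tau>..h \<tau>} (\<lambda>x. u \<tau> x * W_J J1 (x - g \<tau>) + \<rho> * v \<tau> x * W (x - g \<tau>))"])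
      show "continuous_on {s..t} g" by (rule continuous_on_subset[OF g_cont]) (use st in auto)
      fix \<tau> assume "s < \<tau>" "\<tau> < t"
      then show "(g has_real_derivative - \<mu> * integral {g \<tau>..h \<tau>} (\<lambda>x. u \<tau> x * W_J J1 (x - g \<tau>) + \<rho> * v \<tau> x * W (x - g \<tau>))) (at \<tau>)"
        "- \<mu> * integral {g \<tau>..h \<tau>} (\<lambda>x. u \<tau> x * W_J J1 (x - g \<tau>) + \<rho> * v \<tau> x * W (x - g \<tau>)) \<le> - (\<mu> * m0)"
        using dg lowg st by auto
    qed (use st in auto)
    then show "\<mu> * m0 * (t - s) \<le> g s - g t" by simp
  qed
qed

end


lemma int_le_const:
  fixes f :: "real \<Rightarrow> real"
  assumes "f integrable_on {c..d}" "c \<le> d" "\<And>y. y \<in> {c..d} \<Longrightarrow> f y \<le> K"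
  shows "integral {c..d} f \<le> K * (d - c)"
proof -
  have "integral {c..d} f \<le> integral {c..d} (\<lambda>_. K)" by (rule integral_le) (use assms in auto)
  also have "\<dots> = K * (d - c)" using assms(2) by simp
  finally show ?thesis .
qed

context solP begin

lemma UV_bound:
  assumes T: "T \<ge> 0"
  obtains B where "B > 0" "\<And>t x. t \<in> {0..T} \<Longrightarrow> U t x \<le> B \<and> V t x \<le> B"
proof -
  obtain R where R: "R > 0" "\<And>t. t \<in> {0..T} \<Longrightarrow> - R \<le> g t \<and> h t \<le> R \<and> -R \<le> h t \<and> g t \<le> R"
    using dom_bound[OF T] by blast
  define S where "S = {0..T} \<times> {-R..R}"
  have cS: "compact S" unfolding S_def by (intro compact_Times compact_Icc)
  have S0: "S \<subseteq> {0..} \<times> UNIV" by (auto simp: S_def)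
  have "compact ((\<lambda>p. U (fst p) (snd p)) ` S)"
    by (rule compact_continuous_image[OF continuous_on_subset[OF U_cont[unfolded case_prod_beta'] S0] cS])
  then have "bounded ((\<lambda>p. U (fst p) (snd p)) ` S)" by (rule compact_imp_bounded)
  then obtain B1 where B1: "\<forall>z\<in>(\<lambda>p. U (fst p) (snd p)) ` S. norm z \<le> B1" unfolding bounded_iff by blast
  have "compact ((\<lambda>p. V (fst p) (snd p)) ` S)"
    by (rule compact_continuous_image[OF continuous_on_subset[OF V_cont[unfolded case_prod_beta'] S0] cS])
  then have "bounded ((\<lambda>p. V (fst p) (snd p)) ` S)" by (rule compact_imp_bounded)
  then obtain B2 where B2: "\<forall>z\<in>(\<lambda>p. V (fst p) (snd p)) ` S. norm z \<le> B2" unfolding bounded_iff by blast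
  show ?thesis
  proof (rule that[of "max 1 (max B1 B2)"])
    show "max 1 (max B1 B2) > 0" by simp
    fix t x assume t: "t \<in> {0..T}"
    show "U t x \<le> max 1 (max B1 B2) \<and> V t x \<le> max 1 (max B1 B2)"
    proof (cases "x \<in> {-R..R}")
      case True
      then have "(t, x) \<in> S" using t by (simp add: S_def)
      then have "norm (U t x) \<le> B1" "norm (V t x) \<le> B2" using B1 B2 by force+
      then show ?thesis by auto
    next
      case False
      then have "\<not> (g t \<le> x \<and> x \<le> h t)" using R(2)[OF t] by auto
      then show ?thesis by (simp add: U_out V_out)
    qed
  qed
qed

end

locale two = S1: solP d1 d2 a b e \<rho> \<mu>1 h0 J1 J2 W G u0 v0 g1 h1 u1 v1
  + S2: solP d1 d2 a b e \<rho> \<mu>2 h0 J1 J2 W G u0 v0 g2 h2 u2 v2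
  for d1 d2 a b e \<rho> \<mu>1 \<mu>2 h0 :: real and J1 J2 W G u0 v0 g1 h1 g2 h2 :: "real \<Rightarrow> real"
    and u1 v1 u2 v2 :: "real \<Rightarrow> real \<Rightarrow> real" +
  assumes mu12: "\<mu>1 \<le> \<mu>2"

locale two_T = two +
  fixes T R B BJ1 BJ2 BW LW LG \<delta> :: real
  assumes T: "T > 0" and R: "R > 0"
    and R1: "\<And>t. t \<in> {0..T} \<Longrightarrow> - R \<le> g1 t \<and> h1 t \<le> R"
    and R2: "\<And>t. t \<in> {0..T} \<Longrightarrow> - R \<le> g2 t \<and> h2 t \<le> R"
    and B: "B > 0"
    and B1: "\<And>t x. t \<in> {0..T} \<Longrightarrow> S1.U t x \<le> B \<and> S1.V t x \<le> B"
    and B2: "\<And>t x. t \<in> {0..T} \<Longrightarrow> S2.U t x \<le> B \<and> S2.V t x \<le> B"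
    and BJ1: "\<And>x. J1 x \<le> BJ1" and BJ2: "\<And>x. J2 x \<le> BJ2"
    and BW: "BW \<ge> 0" "\<And>y. Wc W y \<le> BW"
    and LW: "LW \<ge> 0" "\<And>p q. p \<in> {0..2*R} \<Longrightarrow> q \<in> {0..2*R} \<Longrightarrow> \<bar>W p - W q\<bar> \<le> LW * \<bar>p - q\<bar>"
    and LG: "LG \<ge> 0" "\<And>p q. 0 \<le> q \<Longrightarrow> q \<le> p \<Longrightarrow> p \<le> B \<Longrightarrow> G p - G q \<le> LG * (p - q)"
    and \<delta>: "\<delta> > 0" "\<And>s t. 0 \<le> s \<Longrightarrow> s \<le> t \<Longrightarrow> t \<le> T \<Longrightarrow> \<delta> * (t - s) \<le> h1 t - h1 s"
       "\<And>s t. 0 \<le> s \<Longrightarrow> s \<le> t \<Longrightarrow> t \<le> T \<Longrightarrow> \<delta> * (t - s) \<le> g1 s - g1 t"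
begin

definition "C = d1 * BJ1 * (2 * R) * B + e * B + d2 * BJ2 * (2 * R) * B + LG * B"
definition "M = C / \<delta> + 1"
definition "Ca = M * W_J J1 0 + \<rho> * (M * BW + B * LW)"
definition "K = \<mu>1 * (2 * R) * Ca + d1 * BJ1 * (2 * R) + e + d2 * BJ2 * (2 * R) + LG + 1"
definition "P \<epsilon> t \<longleftrightarrow> h1 t < h2 t + \<epsilon> * exp (K * t) \<and> g2 t - \<epsilon> * exp (K * t) < g1 t \<and>
   (\<forall>x. S1.U t x < S2.U t x + M * \<epsilon> * exp (K * t) \<and> S1.V t x < S2.V t x + M * \<epsilon> * exp (K * t))"

lemma BJ_nonneg: "0 \<le> BJ1" "0 \<le> BJ2"
  using BJ1[of 0] BJ2[of 0] J_nonneg[OF S1.J1, of 0] J_nonneg[OF S1.J2, of 0] by auto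

lemma C_nonneg: "0 \<le> C"
  unfolding C_def using BJ_nonneg S1.d1 S1.d2 S1.e B LG R by (intro add_nonneg_nonneg mult_nonneg_nonneg) auto

lemma M_pos: "M > 0"
proof -
  have "0 \<le> C / \<delta>" using C_nonneg \<delta>(1) by simp
  then show ?thesis unfolding M_def by linarith
qed

lemma Ca_nonneg: "0 \<le> Ca"
  unfolding Ca_def using M_pos W_J_nonneg[OF S1.J1, of 0] S1.rho BW LW B
  by (intro add_nonneg_nonneg mult_nonneg_nonneg) auto

lemma K_big: "\<mu>1 * (2 * R) * Ca < K" "d1 * BJ1 * (2 * R) + e < K" "d2 * BJ2 * (2 * R) + LG < K"
proof -
  have a: "0 \<le> \<mu>1 * (2 * R) * Ca" using S1.mu R Ca_nonneg by simp
  have b: "0 \<le> d1 * BJ1 * (2 * R)" "0 \<le> d2 * BJ2 * (2 * R)" using S1.d1 S1.d2 BJ_nonneg R by simp_all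
  show "\<mu>1 * (2 * R) * Ca < K" "d1 * BJ1 * (2 * R) + e < K" "d2 * BJ2 * (2 * R) + LG < K"
    unfolding K_def using a b S1.e LG by linarith+
qed

lemma P0: "\<epsilon> > 0 \<Longrightarrow> P \<epsilon> 0"
proof -
  assume \<epsilon>: "\<epsilon> > 0"
  have eqU: "S1.U 0 x = S2.U 0 x \<and> S1.V 0 x = S2.V 0 x" for x
  proof (cases "x \<in> {-h0..h0}")
    case True
    then show ?thesis using S1.init S2.init S1.h_0 S1.g_0 S2.h_0 S2.g_0 by (simp add: S1.U_in S2.U_in S1.V_in S2.V_in)
  next
    case False
    then show ?thesis using S1.h_0 S1.g_0 S2.h_0 S2.g_0 by (simp add: S1.U_out S2.U_out S1.V_out S2.V_out)
  qed
  show ?thesis unfolding P_def using eqU \<epsilon> M_pos S1.h_0 S1.g_0 S2.h_0 S2.g_0 by simp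
qed

lemma UV_out:
  assumes "t \<in> {0..T}" "x \<notin> {-R..R}"
  shows "S1.U t x = 0" "S1.V t x = 0" "S2.U t x = 0" "S2.V t x = 0"
proof -
  have "\<not> (g1 t \<le> x \<and> x \<le> h1 t)" "\<not> (g2 t \<le> x \<and> x \<le> h2 t)" using R1[OF assms(1)] R2[OF assms(1)] assms(2) by auto
  then show "S1.U t x = 0" "S1.V t x = 0" "S2.U t x = 0" "S2.V t x = 0"
    by (simp_all add: S1.U_out S1.V_out S2.U_out S2.V_out)
qed

lemma fail_closed:
  assumes \<epsilon>: "\<epsilon> > 0"
  shows "closed {t \<in> {0..T}. \<not> P \<epsilon> t}"
proof -
  define A1 where "A1 = {0..T} \<inter> (\<lambda>t. h1 t - h2 t - \<epsilon> * exp (K * t)) -` {0..}"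
  define A2 where "A2 = {0..T} \<inter> (\<lambda>t. g2 t - \<epsilon> * exp (K * t) - g1 t) -` {0..}"
  define S where "S = {0..T} \<times> {-R..R}"
  define \<Phi>U where "\<Phi>U p = S1.U (fst p) (snd p) - S2.U (fst p) (snd p) - M * \<epsilon> * exp (K * fst p)" for p
  define \<Phi>V where "\<Phi>V p = S1.V (fst p) (snd p) - S2.V (fst p) (snd p) - M * \<epsilon> * exp (K * fst p)" for p
  define A3 where "A3 = fst ` (S \<inter> \<Phi>U -` {0..})"
  define A4 where "A4 = fst ` (S \<inter> \<Phi>V -` {0..})"
  have ch1: "continuous_on {0..T} h1" "continuous_on {0..T} h2" "continuous_on {0..T} g1" "continuous_on {0..T} g2"
    using continuous_on_subset[OF S1.h_cont] continuous_on_subset[OF S2.h_cont]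
      continuous_on_subset[OF S1.g_cont] continuous_on_subset[OF S2.g_cont] by auto
  have cA1: "closed A1" unfolding A1_def
    by (rule continuous_closed_preimage) (auto intro!: continuous_intros ch1)
  have cA2: "closed A2" unfolding A2_def
    by (rule continuous_closed_preimage) (auto intro!: continuous_intros ch1)
  have cS: "compact S" unfolding S_def by (intro compact_Times compact_Icc)
  have S0: "S \<subseteq> {0..} \<times> UNIV" by (auto simp: S_def)
  have cU1: "continuous_on S (\<lambda>p. S1.U (fst p) (snd p))" "continuous_on S (\<lambda>p. S2.U (fst p) (snd p))"
    "continuous_on S (\<lambda>p. S1.V (fst p) (snd p))" "continuous_on S (\<lambda>p. S2.V (fst p) (snd p))"
    using continuous_on_subset[OF S1.U_cont[unfolded case_prod_beta'] S0]
      continuous_on_subset[OF S2.U_cont[unfolded case_prod_beta'] S0]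
      continuous_on_subset[OF S1.V_cont[unfolded case_prod_beta'] S0]
      continuous_on_subset[OF S2.V_cont[unfolded case_prod_beta'] S0] by auto
  have "compact (S \<inter> \<Phi>U -` {0..})"
  proof -
    have "closed (S \<inter> \<Phi>U -` {0..})" unfolding \<Phi>U_def
      by (rule continuous_closed_preimage) (auto intro!: continuous_intros cU1 compact_imp_closed[OF cS])
    then show ?thesis using cS by (metis compact_Int_closed inf.absorb_iff2 inf_le1)
  qed
  then have cA3: "closed A3" unfolding A3_def
    by (intro compact_imp_closed compact_continuous_image continuous_on_fst continuous_on_id)
  have "compact (S \<inter> \<Phi>V -` {0..})"
  proof -
    have "closed (S \<inter> \<Phi>V -` {0..})" unfolding \<Phi>V_def
      by (rule continuous_closed_preimage) (auto intro!: continuous_intros cU1 compact_imp_closed[OF cS])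
    then show ?thesis using cS by (metis compact_Int_closed inf.absorb_iff2 inf_le1)
  qed
  then have cA4: "closed A4" unfolding A4_def
    by (intro compact_imp_closed compact_continuous_image continuous_on_fst continuous_on_id)
  have "{t \<in> {0..T}. \<not> P \<epsilon> t} = A1 \<union> A2 \<union> A3 \<union> A4"
  proof (rule set_eqI, rule iffI)
    fix t assume "t \<in> {t \<in> {0..T}. \<not> P \<epsilon> t}"
    then have t: "t \<in> {0..T}" and nP: "\<not> P \<epsilon> t" by auto
    consider "\<not> h1 t < h2 t + \<epsilon> * exp (K * t)" | "\<not> g2 t - \<epsilon> * exp (K * t) < g1 t"
      | x where "\<not> S1.U t x < S2.U t x + M * \<epsilon> * exp (K * t)"
      | x where "\<not> S1.V t x < S2.V t x + M * \<epsilon> * exp (K * t)"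
      using nP unfolding P_def by blast
    then show "t \<in> A1 \<union> A2 \<union> A3 \<union> A4"
    proof cases
      case 1 then show ?thesis using t by (auto simp: A1_def)
    next
      case 2 then show ?thesis using t by (auto simp: A2_def)
    next
      case (3 x)
      have "x \<in> {-R..R}"
      proof (rule ccontr)
        assume "x \<notin> {-R..R}"
        then show False using 3 UV_out[OF t] M_pos \<epsilon> by simp
      qed
      then have "(t, x) \<in> S \<inter> \<Phi>U -` {0..}" using t 3 by (auto simp: S_def \<Phi>U_def)
      then show ?thesis unfolding A3_def by (metis UnI1 UnI2 fst_conv image_eqI)
    next
      case (4 x)
      have "x \<in> {-R..R}"
      proof (rule ccontr)
        assume "x \<notin> {-R..R}"
        then show False using 4 UV_out[OF t] M_pos \<epsilon> by simp
      qed
      then have "(t, x) \<in> S \<inter> \<Phi>V -` {0..}" using t 4 by (auto simp: S_def \<Phi>V_def)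
      then show ?thesis unfolding A4_def by (metis UnI2 fst_conv image_eqI)
    qed
  next
    fix t assume "t \<in> A1 \<union> A2 \<union> A3 \<union> A4"
    then consider "t \<in> A1" | "t \<in> A2" | "t \<in> A3" | "t \<in> A4" by blast
    then show "t \<in> {t \<in> {0..T}. \<not> P \<epsilon> t}"
    proof cases
      case 1 then show ?thesis unfolding A1_def P_def by auto
    next
      case 2 then show ?thesis unfolding A2_def P_def by auto
    next
      case 3
      then obtain p where p: "p \<in> S" "0 \<le> \<Phi>U p" "t = fst p" unfolding A3_def by auto
      then have "t \<in> {0..T}" by (auto simp: S_def)
      moreover have "\<not> S1.U t (snd p) < S2.U t (snd p) + M * \<epsilon> * exp (K * t)"
        using p by (auto simp: \<Phi>U_def)
      ultimately show ?thesis unfolding P_def by auto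
    next
      case 4
      then obtain p where p: "p \<in> S" "0 \<le> \<Phi>V p" "t = fst p" unfolding A4_def by auto
      then have "t \<in> {0..T}" by (auto simp: S_def)
      moreover have "\<not> S1.V t (snd p) < S2.V t (snd p) + M * \<epsilon> * exp (K * t)"
        using p by (auto simp: \<Phi>V_def)
      ultimately show ?thesis unfolding P_def by auto
    qed
  qed
  then show ?thesis using cA1 cA2 cA3 cA4 by (simp add: closed_Un)
qed

end


context solP begin

lemma I_ext:
  assumes "t \<ge> 0" "-R \<le> g t" "h t \<le> R"
  shows "integral {g t..h t} (\<lambda>x. u t x * W_J J1 (h t - x) + \<rho> * v t x * W (h t - x))
       = integral {-R..R} (\<lambda>x. U t x * W_J J1 (h t - x) + \<rho> * V t x * Wc W (h t - x))"
    and "integral {g t..h t} (\<lambda>x. u t x * W_J J1 (x - g t) + \<rho> * v t x * W (x - g t))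
       = integral {-R..R} (\<lambda>x. U t x * W_J J1 (x - g t) + \<rho> * V t x * Wc W (x - g t))"
proof -
  have "integral {-R..R} (\<lambda>x. U t x * W_J J1 (h t - x) + \<rho> * V t x * Wc W (h t - x))
      = integral {-R..R} (\<lambda>x. if x \<in> {g t..h t} then u t x * W_J J1 (h t - x) + \<rho> * v t x * W (h t - x) else 0)"
    by (rule integral_cong) (auto simp: U_def V_def W_props(3)[OF W])
  also have "\<dots> = integral ({g t..h t} \<inter> {-R..R}) (\<lambda>x. u t x * W_J J1 (h t - x) + \<rho> * v t x * W (h t - x))"
    by (rule integral_restrict_Int)
  also have "{g t..h t} \<inter> {-R..R} = {g t..h t}" using assms by auto
  finally show "integral {g t..h t} (\<lambda>x. u t x * W_J J1 (h t - x) + \<rho> * v t x * W (h t - x))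
       = integral {-R..R} (\<lambda>x. U t x * W_J J1 (h t - x) + \<rho> * V t x * Wc W (h t - x))" by simp
  have "integral {-R..R} (\<lambda>x. U t x * W_J J1 (x - g t) + \<rho> * V t x * Wc W (x - g t))
      = integral {-R..R} (\<lambda>x. if x \<in> {g t..h t} then u t x * W_J J1 (x - g t) + \<rho> * v t x * W (x - g t) else 0)"
    by (rule integral_cong) (auto simp: U_def V_def W_props(3)[OF W])
  also have "\<dots> = integral ({g t..h t} \<inter> {-R..R}) (\<lambda>x. u t x * W_J J1 (x - g t) + \<rho> * v t x * W (x - g t))"
    by (rule integral_restrict_Int)
  also have "{g t..h t} \<inter> {-R..R} = {g t..h t}" using assms by auto
  finally show "integral {g t..h t} (\<lambda>x. u t x * W_J J1 (x - g t) + \<rho> * v t x * W (x - g t))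
       = integral {-R..R} (\<lambda>x. U t x * W_J J1 (x - g t) + \<rho> * V t x * Wc W (x - g t))" by simp
qed

lemma I_cont:
  assumes "t \<ge> 0"
  shows "continuous_on {-R..R} (\<lambda>x. U t x * W_J J1 (h t - x) + \<rho> * V t x * Wc W (h t - x))"
    and "continuous_on {-R..R} (\<lambda>x. U t x * W_J J1 (x - g t) + \<rho> * V t x * Wc W (x - g t))"
proof -
  have cU: "continuous_on {-R..R} (U t)" "continuous_on {-R..R} (V t)"
    using continuous_on_subset[OF U_cont_x[OF assms]] continuous_on_subset[OF V_cont_x[OF assms]] by auto
  have c1: "continuous_on {-R..R} (\<lambda>x. W_J J1 (h t - x))" "continuous_on {-R..R} (\<lambda>x. W_J J1 (x - g t))"
    by (rule continuous_on_compose2[OF W_J_cont[OF J1]], auto intro!: continuous_intros)+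
  have c2: "continuous_on {-R..R} (\<lambda>x. Wc W (h t - x))" "continuous_on {-R..R} (\<lambda>x. Wc W (x - g t))"
    by (rule continuous_on_compose2[OF W_props(2)[OF W]], auto intro!: continuous_intros)+
  show "continuous_on {-R..R} (\<lambda>x. U t x * W_J J1 (h t - x) + \<rho> * V t x * Wc W (h t - x))"
    by (intro continuous_intros cU c1 c2)
  show "continuous_on {-R..R} (\<lambda>x. U t x * W_J J1 (x - g t) + \<rho> * V t x * Wc W (x - g t))"
    by (intro continuous_intros cU c1 c2)
qed

lemma I_nonneg:
  assumes "t \<ge> 0"
  shows "0 \<le> integral {g t..h t} (\<lambda>x. u t x * W_J J1 (h t - x) + \<rho> * v t x * W (h t - x))"
    and "0 \<le> integral {g t..h t} (\<lambda>x. u t x * W_J J1 (x - g t) + \<rho> * v t x * W (x - g t))"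
proof -
  show "0 \<le> integral {g t..h t} (\<lambda>x. u t x * W_J J1 (h t - x) + \<rho> * v t x * W (h t - x))"
  proof (rule int_nonneg)
    fix x assume x: "x \<in> {g t..h t}"
    have "0 \<le> W (h t - x)" using W x unfolding cond_W_def by auto
    then show "0 \<le> u t x * W_J J1 (h t - x) + \<rho> * v t x * W (h t - x)"
      using uv_nonneg[OF assms] x W_J_nonneg[OF J1] rho by auto
  qed
  show "0 \<le> integral {g t..h t} (\<lambda>x. u t x * W_J J1 (x - g t) + \<rho> * v t x * W (x - g t))"
  proof (rule int_nonneg)
    fix x assume x: "x \<in> {g t..h t}"
    have "0 \<le> W (x - g t)" using W x unfolding cond_W_def by auto
    then show "0 \<le> u t x * W_J J1 (x - g t) + \<rho> * v t x * W (x - g t)"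
      using uv_nonneg[OF assms] x W_J_nonneg[OF J1] rho by auto
  qed
qed

end

context two_T begin

lemma nonstrict:
  assumes \<epsilon>: "\<epsilon> > 0" and ts: "0 < ts" and below: "\<And>s. 0 \<le> s \<Longrightarrow> s < ts \<Longrightarrow> P \<epsilon> s"
  shows "h1 ts \<le> h2 ts + \<epsilon> * exp (K * ts)" "g2 ts - \<epsilon> * exp (K * ts) \<le> g1 ts"
    "\<And>x. S1.U ts x \<le> S2.U ts x + M * \<epsilon> * exp (K * ts)"
    "\<And>x. S1.V ts x \<le> S2.V ts x + M * \<epsilon> * exp (K * ts)"
proof -
  have "0 \<le> (\<lambda>s. h2 s + \<epsilon> * exp (K * s) - h1 s) ts"
    by (rule left_limit_nonneg[OF _ ts])
       (use below in \<open>auto simp: P_def less_imp_le intro!: continuous_intros S1.h_cont S2.h_cont\<close>)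
  then show "h1 ts \<le> h2 ts + \<epsilon> * exp (K * ts)" by simp
  have "0 \<le> (\<lambda>s. g1 s - (g2 s - \<epsilon> * exp (K * s))) ts"
    by (rule left_limit_nonneg[OF _ ts])
       (use below in \<open>auto simp: P_def less_imp_le intro!: continuous_intros S1.g_cont S2.g_cont\<close>)
  then show "g2 ts - \<epsilon> * exp (K * ts) \<le> g1 ts" by simp
  fix x
  have "0 \<le> (\<lambda>s. S2.U s x + M * \<epsilon> * exp (K * s) - S1.U s x) ts"
    by (rule left_limit_nonneg[OF _ ts])
       (use below in \<open>auto simp: P_def less_imp_le intro!: continuous_intros S1.U_cont_t S2.U_cont_t\<close>)
  then show "S1.U ts x \<le> S2.U ts x + M * \<epsilon> * exp (K * ts)" by simp
  have "0 \<le> (\<lambda>s. S2.V s x + M * \<epsilon> * exp (K * s) - S1.V s x) ts"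
    by (rule left_limit_nonneg[OF _ ts])
       (use below in \<open>auto simp: P_def less_imp_le intro!: continuous_intros S1.V_cont_t S2.V_cont_t\<close>)
  then show "S1.V ts x \<le> S2.V ts x + M * \<epsilon> * exp (K * ts)" by simp
qed

lemma Du1_bound:
  assumes \<tau>: "0 < \<tau>" "\<tau> \<le> T" and x: "g1 \<tau> < x" "x < h1 \<tau>"
  shows "d1 * integral {g1 \<tau>..h1 \<tau>} (\<lambda>y. J1 (x - y) * u1 \<tau> y) - d1 * u1 \<tau> x - a * u1 \<tau> x + e * v1 \<tau> x \<le> C"
proof -
  have t0: "\<tau> \<ge> 0" "\<tau> \<in> {0..T}" using \<tau> by auto
  have Rb: "-R \<le> g1 \<tau>" "h1 \<tau> \<le> R" using R1[OF t0(2)] by auto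
  have ub: "u1 \<tau> y \<le> B" "v1 \<tau> y \<le> B" if "y \<in> {g1 \<tau>..h1 \<tau>}" for y
    using B1[OF t0(2), of y] that by (auto simp: S1.U_in S1.V_in)
  have "integral {g1 \<tau>..h1 \<tau>} (\<lambda>y. J1 (x - y) * u1 \<tau> y) \<le> (BJ1 * B) * (h1 \<tau> - g1 \<tau>)"
  proof (rule int_le_const)
    have "continuous_on {g1 \<tau>..h1 \<tau>} (\<lambda>y. J1 (x - y))"
      by (rule continuous_on_compose2[OF J_cont[OF S1.J1]]) (auto intro!: continuous_intros)
    then show "(\<lambda>y. J1 (x - y) * u1 \<tau> y) integrable_on {g1 \<tau>..h1 \<tau>}"
      by (intro integrable_continuous_interval continuous_intros S1.u_cont_on_interval t0)
    show "g1 \<tau> \<le> h1 \<tau>" using x by auto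
    fix y assume y: "y \<in> {g1 \<tau>..h1 \<tau>}"
    show "J1 (x - y) * u1 \<tau> y \<le> BJ1 * B"
      using mult_mono[OF BJ1[of "x - y"] ub(1)[OF y]] J_nonneg[OF S1.J1] S1.uv_nonneg[OF t0(1)] y B BJ_nonneg by auto
  qed
  also have "\<dots> \<le> (BJ1 * B) * (2 * R)" using Rb BJ_nonneg B by (intro mult_left_mono) auto
  finally have I: "d1 * integral {g1 \<tau>..h1 \<tau>} (\<lambda>y. J1 (x - y) * u1 \<tau> y) \<le> d1 * BJ1 * (2 * R) * B"
    using S1.d1 by (simp add: mult_left_mono algebra_simps)
  have "0 \<le> u1 \<tau> x" "v1 \<tau> x \<le> B" using S1.uv_nonneg[OF t0(1)] ub x by auto
  moreover have "0 \<le> d1 * u1 \<tau> x" "0 \<le> a * u1 \<tau> x" using \<open>0 \<le> u1 \<tau> x\<close> S1.d1 S1.a by simp_all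
  moreover have "e * v1 \<tau> x \<le> e * B" using \<open>v1 \<tau> x \<le> B\<close> S1.e by simp
  ultimately have "- d1 * u1 \<tau> x - a * u1 \<tau> x + e * v1 \<tau> x \<le> e * B" by simp
  moreover have "0 \<le> d2 * BJ2 * (2 * R) * B + LG * B" using S1.d2 BJ_nonneg R B LG by simp
  ultimately show ?thesis using I unfolding C_def by linarith
qed

lemma Dv1_bound:
  assumes \<tau>: "0 < \<tau>" "\<tau> \<le> T" and x: "g1 \<tau> < x" "x < h1 \<tau>"
  shows "d2 * integral {g1 \<tau>..h1 \<tau>} (\<lambda>y. J2 (x - y) * v1 \<tau> y) - d2 * v1 \<tau> x - b * v1 \<tau> x + G (u1 \<tau> x) \<le> C"
proof -
  have t0: "\<tau> \<ge> 0" "\<tau> \<in> {0..T}" using \<tau> by auto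
  have Rb: "-R \<le> g1 \<tau>" "h1 \<tau> \<le> R" using R1[OF t0(2)] by auto
  have ub: "u1 \<tau> y \<le> B" "v1 \<tau> y \<le> B" if "y \<in> {g1 \<tau>..h1 \<tau>}" for y
    using B1[OF t0(2), of y] that by (auto simp: S1.U_in S1.V_in)
  have "integral {g1 \<tau>..h1 \<tau>} (\<lambda>y. J2 (x - y) * v1 \<tau> y) \<le> (BJ2 * B) * (h1 \<tau> - g1 \<tau>)"
  proof (rule int_le_const)
    have "continuous_on {g1 \<tau>..h1 \<tau>} (\<lambda>y. J2 (x - y))"
      by (rule continuous_on_compose2[OF J_cont[OF S1.J2]]) (auto intro!: continuous_intros)
    then show "(\<lambda>y. J2 (x - y) * v1 \<tau> y) integrable_on {g1 \<tau>..h1 \<tau>}"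
      by (intro integrable_continuous_interval continuous_intros S1.u_cont_on_interval t0)
    show "g1 \<tau> \<le> h1 \<tau>" using x by auto
    fix y assume y: "y \<in> {g1 \<tau>..h1 \<tau>}"
    show "J2 (x - y) * v1 \<tau> y \<le> BJ2 * B"
      using mult_mono[OF BJ2[of "x - y"] ub(2)[OF y]] J_nonneg[OF S1.J2] S1.uv_nonneg[OF t0(1)] y B BJ_nonneg by auto
  qed
  also have "\<dots> \<le> (BJ2 * B) * (2 * R)" using Rb BJ_nonneg B by (intro mult_left_mono) auto
  finally have I: "d2 * integral {g1 \<tau>..h1 \<tau>} (\<lambda>y. J2 (x - y) * v1 \<tau> y) \<le> d2 * BJ2 * (2 * R) * B"
    using S1.d2 by (simp add: mult_left_mono algebra_simps)
  have u: "0 \<le> u1 \<tau> x" "u1 \<tau> x \<le> B" "0 \<le> v1 \<tau> x" using S1.uv_nonneg[OF t0(1)] ub x by auto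
  have "G (u1 \<tau> x) - G 0 \<le> LG * (u1 \<tau> x - 0)" by (rule LG(2)) (use u in auto)
  then have "G (u1 \<tau> x) \<le> LG * B" using G_props(1)[OF S1.G] u LG(1) mult_left_mono[OF u(2) LG(1)] by simp
  moreover have "0 \<le> d2 * v1 \<tau> x" "0 \<le> b * v1 \<tau> x" using u S1.d2 S1.b by simp_all
  moreover have "- d2 * v1 \<tau> x - b * v1 \<tau> x \<le> 0" using calculation(2,3) by simp
  moreover have "0 \<le> d1 * BJ1 * (2 * R) * B + e * B" using S1.d1 S1.e BJ_nonneg R B by simp
  ultimately show ?thesis using I unfolding C_def by linarith
qed

lemma strip:
  fixes Z :: "real \<Rightarrow> real \<Rightarrow> real"
  assumes \<epsilon>: "\<epsilon> > 0" and ts: "0 < ts" "ts \<le> T"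
    and hs: "h1 ts < h2 ts + \<epsilon> * exp (K * ts)" and gs: "g2 ts - \<epsilon> * exp (K * ts) < g1 ts"
    and x: "g1 ts < x" "x < h1 ts" "\<not> (g2 ts < x \<and> x < h2 ts)"
    and Zc: "continuous_on {0..} (\<lambda>s. Z s x)"
    and Zb: "\<And>s. s \<ge> 0 \<Longrightarrow> Z s (g1 s) = 0 \<and> Z s (h1 s) = 0"
    and Zd: "\<And>\<tau>. 0 < \<tau> \<Longrightarrow> \<tau> \<le> T \<Longrightarrow> g1 \<tau> < x \<Longrightarrow> x < h1 \<tau> \<Longrightarrow>
              \<exists>D. ((\<lambda>s. Z s x) has_real_derivative D) (at \<tau>) \<and> D \<le> C"
  shows "Z ts x < M * (\<epsilon> * exp (K * ts))"
proof -
  define E where "E = \<epsilon> * exp (K * ts)"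
  have E: "E > 0" using \<epsilon> by (simp add: E_def)
  have ts0: "ts \<ge> 0" using ts by simp
  obtain s1 where s1: "0 \<le> s1" "s1 < ts" "Z s1 x = 0" "\<delta> * (ts - s1) < E"
    and inter: "\<And>\<tau>. s1 < \<tau> \<Longrightarrow> \<tau> < ts \<Longrightarrow> g1 \<tau> < x \<and> x < h1 \<tau>"
  proof (cases "h2 ts \<le> x")
    case True
    have "h1 0 \<le> x" using S1.h_0 S2.h_ge[OF ts0] True by simp
    then obtain s1 where s1: "s1 \<in> {0..ts}" "h1 s1 = x"
      using IVT'[of h1 0 x ts] x(2) ts0 continuous_on_subset[OF S1.h_cont, of "{0..ts}"] by auto
    have "s1 \<noteq> ts" using s1 x by auto
    then have s1ts: "s1 < ts" using s1 by auto
    have "\<delta> * (ts - s1) \<le> h1 ts - h1 s1" using \<delta>(2)[of s1 ts] s1 ts by auto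
    also have "\<dots> < E" using s1 True hs by (simp add: E_def)
    finally have d: "\<delta> * (ts - s1) < E" .
    show ?thesis
    proof (rule that[OF _ s1ts _ d])
      show "0 \<le> s1" using s1 by auto
      show "Z s1 x = 0" using Zb[of s1] s1 by auto
      fix \<tau> assume \<tau>: "s1 < \<tau>" "\<tau> < ts"
      have "\<delta> * (\<tau> - s1) \<le> h1 \<tau> - h1 s1" using \<delta>(2)[of s1 \<tau>] s1 \<tau> ts by auto
      moreover have "0 < \<delta> * (\<tau> - s1)" using \<delta>(1) \<tau> by simp
      ultimately have "x < h1 \<tau>" using s1 by simp
      moreover have "g1 \<tau> < x"
        using S1.g_le[of \<tau>] S2.h_ge[OF ts0] True S1.h0 \<tau> s1 by auto
      ultimately show "g1 \<tau> < x \<and> x < h1 \<tau>" by simp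
    qed
  next
    case False
    then have xg: "x \<le> g2 ts" using x(3) by auto
    have "x \<le> g1 0" using S1.g_0 S2.g_le[OF ts0] xg by simp
    then obtain s1 where s1: "s1 \<in> {0..ts}" "g1 s1 = x"
      using IVT2'[of g1 ts x 0] x(1) ts0 continuous_on_subset[OF S1.g_cont, of "{0..ts}"] by auto
    have "s1 \<noteq> ts" using s1 x by auto
    then have s1ts: "s1 < ts" using s1 by auto
    have "\<delta> * (ts - s1) \<le> g1 s1 - g1 ts" using \<delta>(3)[of s1 ts] s1 ts by auto
    also have "\<dots> < E" using s1 xg gs by (simp add: E_def)
    finally have d: "\<delta> * (ts - s1) < E" .
    show ?thesis
    proof (rule that[OF _ s1ts _ d])
      show "0 \<le> s1" using s1 by auto
      show "Z s1 x = 0" using Zb[of s1] s1 by auto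
      fix \<tau> assume \<tau>: "s1 < \<tau>" "\<tau> < ts"
      have "\<delta> * (\<tau> - s1) \<le> g1 s1 - g1 \<tau>" using \<delta>(3)[of s1 \<tau>] s1 \<tau> ts by auto
      moreover have "0 < \<delta> * (\<tau> - s1)" using \<delta>(1) \<tau> by simp
      ultimately have "g1 \<tau> < x" using s1 by simp
      moreover have "x < h1 \<tau>"
        using S1.h_ge[of \<tau>] S2.g_le[OF ts0] xg S1.h0 \<tau> s1 by auto
      ultimately show "g1 \<tau> < x \<and> x < h1 \<tau>" by simp
    qed
  qed
  have "Z ts x - Z s1 x \<le> C * (ts - s1)"
  proof -
    have "\<forall>\<tau>\<in>{s1<..<ts}. \<exists>D. ((\<lambda>s. Z s x) has_real_derivative D) (at \<tau>) \<and> D \<le> C"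
      using Zd inter s1 ts by auto
    then obtain D where D: "\<And>\<tau>. \<tau> \<in> {s1<..<ts} \<Longrightarrow> ((\<lambda>s. Z s x) has_real_derivative D \<tau>) (at \<tau>) \<and> D \<tau> \<le> C"
      by metis
    show ?thesis
      by (rule mvt_upper[where f="\<lambda>s. Z s x" and f'=D])
         (use D s1 in \<open>auto intro: continuous_on_subset[OF Zc]\<close>)
  qed
  then have "Z ts x \<le> C * (ts - s1)" using s1 by simp
  also have "\<dots> \<le> C * (E / \<delta>)"
  proof -
    have "ts - s1 \<le> E / \<delta>" using s1(4) \<delta>(1) by (simp add: pos_le_divide_eq mult.commute less_imp_le)
    from mult_left_mono[OF this C_nonneg] show ?thesis .
  qed
  also have "\<dots> < M * E" using E \<delta>(1) by (simp add: M_def algebra_simps)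
  finally show ?thesis by (simp add: E_def)
qed

end


context two_T begin

lemma pw:
  fixes U1 U2 V1 V2 p1 p2 E :: real
  assumes U: "U1 \<le> U2 + M * E" "0 \<le> U1" "0 \<le> U2"
    and V: "V1 \<le> V2 + M * E" "0 \<le> V1" "0 \<le> V2" "V2 \<le> B"
    and E: "0 \<le> E" and p: "p1 - p2 = E"
    and p1: "U1 \<noteq> 0 \<or> V1 \<noteq> 0 \<Longrightarrow> 0 \<le> p1 \<and> p1 \<le> 2 * R"
    and p2: "V2 \<noteq> 0 \<Longrightarrow> 0 \<le> p2 \<and> p2 \<le> 2 * R"
  shows "U1 * W_J J1 p1 + \<rho> * V1 * Wc W p1 \<le> U2 * W_J J1 p2 + \<rho> * V2 * Wc W p2 + Ca * E"
proof -
  have ME: "0 \<le> M * E" using M_pos E by simp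
  have wj: "\<And>y. 0 \<le> W_J J1 y" using W_J_nonneg[OF S1.J1] .
  have wc: "\<And>y. 0 \<le> Wc W y" using W_props(1)[OF S1.W] .
  have partU: "U1 * W_J J1 p1 \<le> U2 * W_J J1 p2 + M * E * W_J J1 0"
  proof (cases "U1 = 0")
    case True then show ?thesis using U(3) wj ME by simp
  next
    case False
    then have "0 \<le> p1" using p1 by auto
    have a1: "W_J J1 p1 \<le> W_J J1 0" using W_J_antimono[OF S1.J1 \<open>0 \<le> p1\<close>] .
    have a2: "W_J J1 p1 \<le> W_J J1 p2" using W_J_antimono[OF S1.J1, of p2 p1] p E by simp
    have "U1 * W_J J1 p1 \<le> (U2 + M * E) * W_J J1 p1" using U(1) wj by (simp add: mult_right_mono)
    also have "\<dots> = U2 * W_J J1 p1 + M * E * W_J J1 p1" by (simp add: algebra_simps)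
    also have "\<dots> \<le> U2 * W_J J1 p2 + M * E * W_J J1 0"
      using mult_left_mono[OF a2 U(3)] mult_left_mono[OF a1 ME] by simp
    finally show ?thesis .
  qed
  have partV: "V1 * Wc W p1 \<le> V2 * Wc W p2 + (M * E * BW + B * LW * E)"
  proof (cases "V1 = 0")
    case True
    then show ?thesis using V(3) wc ME BW(1) LW(1) B E by simp
  next
    case False
    then have p1': "0 \<le> p1" "p1 \<le> 2 * R" using p1 by auto
    have "V1 * Wc W p1 \<le> (V2 + M * E) * Wc W p1" using V(1) wc by (simp add: mult_right_mono)
    also have "\<dots> = V2 * Wc W p1 + M * E * Wc W p1" by (simp add: algebra_simps)
    also have "M * E * Wc W p1 \<le> M * E * BW" using BW(2) ME by (simp add: mult_left_mono)
    also have "V2 * Wc W p1 \<le> V2 * Wc W p2 + B * LW * E"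
    proof (cases "V2 = 0")
      case True then show ?thesis using B LW(1) E by simp
    next
      case False
      then have p2': "0 \<le> p2" "p2 \<le> 2 * R" using p2 by auto
      have "\<bar>W p1 - W p2\<bar> \<le> LW * \<bar>p1 - p2\<bar>" using LW(2) p1' p2' by auto
      then have "W p1 - W p2 \<le> LW * E" using p E by simp
      then have "Wc W p1 - Wc W p2 \<le> LW * E" using p1' p2' by (simp add: W_props(3)[OF S1.W])
      then have "V2 * (Wc W p1 - Wc W p2) \<le> V2 * (LW * E)" using V(3) by (simp add: mult_left_mono)
      also have "\<dots> \<le> B * (LW * E)" using V(4) LW(1) E by (simp add: mult_right_mono)
      finally show ?thesis by (simp add: algebra_simps)
    qed
    finally show ?thesis by simp
  qed
  have "\<rho> * (V1 * Wc W p1) \<le> \<rho> * (V2 * Wc W p2 + (M * E * BW + B * LW * E))"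
    using partV S1.rho by (simp add: mult_left_mono)
  then have "\<rho> * V1 * Wc W p1 \<le> \<rho> * V2 * Wc W p2 + \<rho> * (M * E * BW + B * LW * E)"
    by (simp add: algebra_simps)
  moreover have "Ca * E = M * E * W_J J1 0 + \<rho> * (M * E * BW + B * LW * E)"
    by (simp add: Ca_def algebra_simps)
  ultimately show ?thesis using partU by linarith
qed

lemma touch_integral:
  fixes A1 A2 :: "real \<Rightarrow> real"
  assumes c1: "continuous_on {-R..R} A1" and c2: "continuous_on {-R..R} A2"
    and le: "\<And>x. x \<in> {-R..R} \<Longrightarrow> A1 x \<le> A2 x + c"
  shows "integral {-R..R} A1 \<le> integral {-R..R} A2 + c * (2 * R)"
proof -
  have i1: "A1 integrable_on {-R..R}" using c1 integrable_continuous_interval by blast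
  have i2: "A2 integrable_on {-R..R}" using c2 integrable_continuous_interval by blast
  have "integral {-R..R} A1 \<le> integral {-R..R} (\<lambda>x. A2 x + c)"
    by (rule integral_le[OF i1 integrable_add[OF i2 integrable_const_ivl]]) (use le in auto)
  also have "\<dots> = integral {-R..R} A2 + integral {-R..R} (\<lambda>_. c)"
    by (rule integral_add[OF i2 integrable_const_ivl])
  also have "integral {-R..R} (\<lambda>_. c) = c * (2 * R)" using R by simp
  finally show ?thesis .
qed

lemma no_h_fail:
  assumes \<epsilon>: "\<epsilon> > 0" and ts: "0 < ts" "ts \<le> T" and below: "\<And>s. 0 \<le> s \<Longrightarrow> s < ts \<Longrightarrow> P \<epsilon> s"
  shows "h1 ts < h2 ts + \<epsilon> * exp (K * ts)"
proof (rule ccontr)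
  assume neg: "\<not> h1 ts < h2 ts + \<epsilon> * exp (K * ts)"
  define E where "E = \<epsilon> * exp (K * ts)"
  have E: "E > 0" using \<epsilon> by (simp add: E_def)
  have heq: "h1 ts = h2 ts + E" using nonstrict(1)[OF \<epsilon> ts(1) below] neg by (simp add: E_def)
  have ts0: "ts \<ge> 0" "ts \<in> {0..T}" using ts by auto
  have Rb1: "-R \<le> g1 ts" "h1 ts \<le> R" using R1[OF ts0(2)] by auto
  have Rb2: "-R \<le> g2 ts" "h2 ts \<le> R" using R2[OF ts0(2)] by auto
  define I1 where "I1 = integral {g1 ts..h1 ts} (\<lambda>x. u1 ts x * W_J J1 (h1 ts - x) + \<rho> * v1 ts x * W (h1 ts - x))"
  define I2 where "I2 = integral {g2 ts..h2 ts} (\<lambda>x. u2 ts x * W_J J1 (h2 ts - x) + \<rho> * v2 ts x * W (h2 ts - x))"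
  have I2: "0 \<le> I2" unfolding I2_def by (rule S2.I_nonneg(1)[OF ts0(1)])
  have "I1 \<le> I2 + Ca * E * (2 * R)"
  proof -
    have "I1 = integral {-R..R} (\<lambda>x. S1.U ts x * W_J J1 (h1 ts - x) + \<rho> * S1.V ts x * Wc W (h1 ts - x))"
      unfolding I1_def by (rule S1.I_ext(1)[OF ts0(1) Rb1])
    moreover have "I2 = integral {-R..R} (\<lambda>x. S2.U ts x * W_J J1 (h2 ts - x) + \<rho> * S2.V ts x * Wc W (h2 ts - x))"
      unfolding I2_def by (rule S2.I_ext(1)[OF ts0(1) Rb2])
    moreover have "integral {-R..R} (\<lambda>x. S1.U ts x * W_J J1 (h1 ts - x) + \<rho> * S1.V ts x * Wc W (h1 ts - x))
        \<le> integral {-R..R} (\<lambda>x. S2.U ts x * W_J J1 (h2 ts - x) + \<rho> * S2.V ts x * Wc W (h2 ts - x)) + Ca * E * (2 * R)"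
    proof (rule touch_integral[OF S1.I_cont(1)[OF ts0(1)] S2.I_cont(1)[OF ts0(1)]])
      fix x assume x: "x \<in> {-R..R}"
      show "S1.U ts x * W_J J1 (h1 ts - x) + \<rho> * S1.V ts x * Wc W (h1 ts - x)
          \<le> S2.U ts x * W_J J1 (h2 ts - x) + \<rho> * S2.V ts x * Wc W (h2 ts - x) + Ca * E"
      proof (rule pw)
        show "S1.U ts x \<le> S2.U ts x + M * E" using nonstrict(3)[OF \<epsilon> ts(1) below] by (simp add: E_def mult.assoc)
        show "S1.V ts x \<le> S2.V ts x + M * E" using nonstrict(4)[OF \<epsilon> ts(1) below] by (simp add: E_def mult.assoc)
        show "0 \<le> S1.U ts x" "0 \<le> S2.U ts x" "0 \<le> S1.V ts x" "0 \<le> S2.V ts x"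
          using S1.U_nonneg S2.U_nonneg S1.V_nonneg S2.V_nonneg ts0 by auto
        show "S2.V ts x \<le> B" using B2[OF ts0(2)] by auto
        show "0 \<le> E" using E by simp
        show "h1 ts - x - (h2 ts - x) = E" using heq by simp
        show "0 \<le> h1 ts - x \<and> h1 ts - x \<le> 2 * R" if "S1.U ts x \<noteq> 0 \<or> S1.V ts x \<noteq> 0"
        proof -
          have "g1 ts \<le> x \<and> x \<le> h1 ts" using that S1.U_out S1.V_out by blast
          then show ?thesis using Rb1 by auto
        qed
        show "0 \<le> h2 ts - x \<and> h2 ts - x \<le> 2 * R" if "S2.V ts x \<noteq> 0"
        proof -
          have "g2 ts \<le> x \<and> x \<le> h2 ts" using that S2.V_out by blast
          then show ?thesis using Rb2 by auto
        qed
      qed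
    qed
    ultimately show ?thesis by simp
  qed
  define f where "f s = h1 s - h2 s - \<epsilon> * exp (K * s)" for s
  have D: "(f has_real_derivative (\<mu>1 * I1 - \<mu>2 * I2 - \<epsilon> * (exp (K * ts) * K))) (at ts)"
    unfolding f_def I1_def I2_def
    by (rule derivative_eq_intros S1.dh[OF ts(1)] S2.dh[OF ts(1)] refl | simp)+
  have "0 \<le> \<mu>1 * I1 - \<mu>2 * I2 - \<epsilon> * (exp (K * ts) * K)"
  proof (rule deriv_touch[OF D])
    show "0 \<le> f ts" using heq by (simp add: f_def E_def)
    show "0 < ts" by (rule ts(1))
    fix s assume "ts - ts < s" "s < ts"
    then have "P \<epsilon> s" using below by auto
    then show "f s < 0" by (simp add: f_def P_def)
  qed
  moreover have "\<mu>1 * I2 \<le> \<mu>2 * I2" using mu12 I2 by (simp add: mult_right_mono)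
  moreover have "\<mu>1 * I1 \<le> \<mu>1 * (I2 + Ca * E * (2 * R))"
    using \<open>I1 \<le> I2 + Ca * E * (2 * R)\<close> S1.mu by (simp add: mult_left_mono)
  moreover have "\<mu>1 * (2 * R) * Ca * E < K * E" using K_big(1) E by simp
  ultimately show False by (simp add: E_def algebra_simps)
qed

lemma no_g_fail:
  assumes \<epsilon>: "\<epsilon> > 0" and ts: "0 < ts" "ts \<le> T" and below: "\<And>s. 0 \<le> s \<Longrightarrow> s < ts \<Longrightarrow> P \<epsilon> s"
  shows "g2 ts - \<epsilon> * exp (K * ts) < g1 ts"
proof (rule ccontr)
  assume neg: "\<not> g2 ts - \<epsilon> * exp (K * ts) < g1 ts"
  define E where "E = \<epsilon> * exp (K * ts)"
  have E: "E > 0" using \<epsilon> by (simp add: E_def)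
  have geq: "g1 ts = g2 ts - E" using nonstrict(2)[OF \<epsilon> ts(1) below] neg by (simp add: E_def)
  have ts0: "ts \<ge> 0" "ts \<in> {0..T}" using ts by auto
  have Rb1: "-R \<le> g1 ts" "h1 ts \<le> R" using R1[OF ts0(2)] by auto
  have Rb2: "-R \<le> g2 ts" "h2 ts \<le> R" using R2[OF ts0(2)] by auto
  define I1 where "I1 = integral {g1 ts..h1 ts} (\<lambda>x. u1 ts x * W_J J1 (x - g1 ts) + \<rho> * v1 ts x * W (x - g1 ts))"
  define I2 where "I2 = integral {g2 ts..h2 ts} (\<lambda>x. u2 ts x * W_J J1 (x - g2 ts) + \<rho> * v2 ts x * W (x - g2 ts))"
  have I2: "0 \<le> I2" unfolding I2_def by (rule S2.I_nonneg(2)[OF ts0(1)])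
  have "I1 \<le> I2 + Ca * E * (2 * R)"
  proof -
    have "I1 = integral {-R..R} (\<lambda>x. S1.U ts x * W_J J1 (x - g1 ts) + \<rho> * S1.V ts x * Wc W (x - g1 ts))"
      unfolding I1_def by (rule S1.I_ext(2)[OF ts0(1) Rb1])
    moreover have "I2 = integral {-R..R} (\<lambda>x. S2.U ts x * W_J J1 (x - g2 ts) + \<rho> * S2.V ts x * Wc W (x - g2 ts))"
      unfolding I2_def by (rule S2.I_ext(2)[OF ts0(1) Rb2])
    moreover have "integral {-R..R} (\<lambda>x. S1.U ts x * W_J J1 (x - g1 ts) + \<rho> * S1.V ts x * Wc W (x - g1 ts))
        \<le> integral {-R..R} (\<lambda>x. S2.U ts x * W_J J1 (x - g2 ts) + \<rho> * S2.V ts x * Wc W (x - g2 ts)) + Ca * E * (2 * R)"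
    proof (rule touch_integral[OF S1.I_cont(2)[OF ts0(1)] S2.I_cont(2)[OF ts0(1)]])
      fix x assume x: "x \<in> {-R..R}"
      show "S1.U ts x * W_J J1 (x - g1 ts) + \<rho> * S1.V ts x * Wc W (x - g1 ts)
          \<le> S2.U ts x * W_J J1 (x - g2 ts) + \<rho> * S2.V ts x * Wc W (x - g2 ts) + Ca * E"
      proof (rule pw)
        show "S1.U ts x \<le> S2.U ts x + M * E" using nonstrict(3)[OF \<epsilon> ts(1) below] by (simp add: E_def mult.assoc)
        show "S1.V ts x \<le> S2.V ts x + M * E" using nonstrict(4)[OF \<epsilon> ts(1) below] by (simp add: E_def mult.assoc)
        show "0 \<le> S1.U ts x" "0 \<le> S2.U ts x" "0 \<le> S1.V ts x" "0 \<le> S2.V ts x"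
          using S1.U_nonneg S2.U_nonneg S1.V_nonneg S2.V_nonneg ts0 by auto
        show "S2.V ts x \<le> B" using B2[OF ts0(2)] by auto
        show "0 \<le> E" using E by simp
        show "x - g1 ts - (x - g2 ts) = E" using geq by simp
        show "0 \<le> x - g1 ts \<and> x - g1 ts \<le> 2 * R" if "S1.U ts x \<noteq> 0 \<or> S1.V ts x \<noteq> 0"
        proof -
          have "g1 ts \<le> x \<and> x \<le> h1 ts" using that S1.U_out S1.V_out by blast
          then show ?thesis using Rb1 by auto
        qed
        show "0 \<le> x - g2 ts \<and> x - g2 ts \<le> 2 * R" if "S2.V ts x \<noteq> 0"
        proof -
          have "g2 ts \<le> x \<and> x \<le> h2 ts" using that S2.V_out by blast
          then show ?thesis using Rb2 by auto
        qed
      qed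
    qed
    ultimately show ?thesis by simp
  qed
  define f where "f s = g2 s - \<epsilon> * exp (K * s) - g1 s" for s
  have D: "(f has_real_derivative (- \<mu>2 * I2 - \<epsilon> * (exp (K * ts) * K) - - \<mu>1 * I1)) (at ts)"
    unfolding f_def I1_def I2_def
    by (rule derivative_eq_intros S1.dg[OF ts(1)] S2.dg[OF ts(1)] refl | simp)+
  have "0 \<le> - \<mu>2 * I2 - \<epsilon> * (exp (K * ts) * K) - - \<mu>1 * I1"
  proof (rule deriv_touch[OF D])
    show "0 \<le> f ts" using geq by (simp add: f_def E_def)
    show "0 < ts" by (rule ts(1))
    fix s assume "ts - ts < s" "s < ts"
    then have "P \<epsilon> s" using below by auto
    then show "f s < 0" by (simp add: f_def P_def)
  qed
  moreover have "\<mu>1 * I2 \<le> \<mu>2 * I2" using mu12 I2 by (simp add: mult_right_mono)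
  moreover have "\<mu>1 * I1 \<le> \<mu>1 * (I2 + Ca * E * (2 * R))"
    using \<open>I1 \<le> I2 + Ca * E * (2 * R)\<close> S1.mu by (simp add: mult_left_mono)
  moreover have "\<mu>1 * (2 * R) * Ca * E < K * E" using K_big(1) E by simp
  ultimately show False by (simp add: E_def algebra_simps)
qed

end


context two_T begin

lemma no_U_fail:
  assumes \<epsilon>: "\<epsilon> > 0" and ts: "0 < ts" "ts \<le> T" and below: "\<And>s. 0 \<le> s \<Longrightarrow> s < ts \<Longrightarrow> P \<epsilon> s"
    and hs: "h1 ts < h2 ts + \<epsilon> * exp (K * ts)" and gs: "g2 ts - \<epsilon> * exp (K * ts) < g1 ts"
  shows "S1.U ts x < S2.U ts x + M * \<epsilon> * exp (K * ts)"
proof (rule ccontr)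
  assume neg: "\<not> S1.U ts x < S2.U ts x + M * \<epsilon> * exp (K * ts)"
  define E where "E = \<epsilon> * exp (K * ts)"
  have E: "E > 0" using \<epsilon> by (simp add: E_def)
  have ts0: "ts \<ge> 0" "ts \<in> {0..T}" using ts by auto
  have Rb1: "-R \<le> g1 ts" "h1 ts \<le> R" using R1[OF ts0(2)] by auto
  have Rb2: "-R \<le> g2 ts" "h2 ts \<le> R" using R2[OF ts0(2)] by auto
  have ME: "0 < M * E" using M_pos E by simp
  have U1ge: "S2.U ts x + M * E \<le> S1.U ts x" using neg by (simp add: E_def mult.assoc)
  have U2nn: "0 \<le> S2.U ts x" using S2.U_nonneg[OF ts0(1)] .
  have U1pos: "0 < S1.U ts x" using U1ge U2nn ME by linarith
  have x1: "g1 ts < x" "x < h1 ts"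
  proof -
    have "g1 ts \<le> x \<and> x \<le> h1 ts" using U1pos S1.U_out by force
    moreover have "x \<noteq> g1 ts" "x \<noteq> h1 ts" using U1pos S1.U_bd[OF ts0(1)] by auto
    ultimately show "g1 ts < x" "x < h1 ts" by auto
  qed
  show False
  proof (cases "g2 ts < x \<and> x < h2 ts")
    case True
    then have x2: "g2 ts < x" "x < h2 ts" by auto
    define I1 where "I1 = integral {g1 ts..h1 ts} (\<lambda>y. J1 (x - y) * u1 ts y)"
    define I2 where "I2 = integral {g2 ts..h2 ts} (\<lambda>y. J1 (x - y) * u2 ts y)"
    define f where "f s = S1.U s x - S2.U s x - M * \<epsilon> * exp (K * s)" for s
    have D: "(f has_real_derivative
        ((d1 * I1 - d1 * u1 ts x - a * u1 ts x + e * v1 ts x) - (d1 * I2 - d1 * u2 ts x - a * u2 ts x + e * v2 ts x)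
          - M * \<epsilon> * (exp (K * ts) * K))) (at ts)"
      unfolding f_def I1_def I2_def
      by (rule derivative_eq_intros S1.dU[OF ts(1) x1] S2.dU[OF ts(1) x2] refl | simp)+
    have "0 \<le> (d1 * I1 - d1 * u1 ts x - a * u1 ts x + e * v1 ts x) - (d1 * I2 - d1 * u2 ts x - a * u2 ts x + e * v2 ts x)
          - M * \<epsilon> * (exp (K * ts) * K)"
    proof (rule deriv_touch[OF D])
      show "0 \<le> f ts" using neg by (simp add: f_def)
      show "0 < ts" by (rule ts(1))
      fix s assume "ts - ts < s" "s < ts"
      then have "P \<epsilon> s" using below by auto
      then have "S1.U s x < S2.U s x + M * \<epsilon> * exp (K * s)" unfolding P_def by blast
      then show "f s < 0" by (simp add: f_def)
    qed
    moreover have "I1 \<le> I2 + BJ1 * (M * E) * (2 * R)"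
    proof -
      have "I1 = integral {-R..R} (\<lambda>y. J1 (x - y) * S1.U ts y)"
        unfolding I1_def by (rule S1.int_ext(1)[OF Rb1])
      moreover have "I2 = integral {-R..R} (\<lambda>y. J1 (x - y) * S2.U ts y)"
        unfolding I2_def by (rule S2.int_ext(1)[OF Rb2])
      moreover have "integral {-R..R} (\<lambda>y. J1 (x - y) * S1.U ts y)
          \<le> integral {-R..R} (\<lambda>y. J1 (x - y) * S2.U ts y) + BJ1 * (M * E) * (2 * R)"
      proof (rule touch_integral)
        have cJ: "continuous_on {-R..R} (\<lambda>y. J1 (x - y))"
          by (rule continuous_on_compose2[OF J_cont[OF S1.J1]]) (auto intro!: continuous_intros)
        show "continuous_on {-R..R} (\<lambda>y. J1 (x - y) * S1.U ts y)"
          by (intro continuous_intros cJ continuous_on_subset[OF S1.U_cont_x[OF ts0(1)]]) auto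
        show "continuous_on {-R..R} (\<lambda>y. J1 (x - y) * S2.U ts y)"
          by (intro continuous_intros cJ continuous_on_subset[OF S2.U_cont_x[OF ts0(1)]]) auto
        fix y
        have "S1.U ts y \<le> S2.U ts y + M * E" using nonstrict(3)[OF \<epsilon> ts(1) below] by (simp add: E_def mult.assoc)
        then have "J1 (x - y) * S1.U ts y \<le> J1 (x - y) * (S2.U ts y + M * E)"
          using J_nonneg[OF S1.J1] by (simp add: mult_left_mono)
        also have "\<dots> = J1 (x - y) * S2.U ts y + J1 (x - y) * (M * E)" by (simp add: algebra_simps)
        also have "J1 (x - y) * (M * E) \<le> BJ1 * (M * E)" using BJ1 ME by (simp add: mult_right_mono)
        finally show "J1 (x - y) * S1.U ts y \<le> J1 (x - y) * S2.U ts y + BJ1 * (M * E)" by simp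
      qed
      ultimately show ?thesis by simp
    qed
    moreover have "u1 ts x - u2 ts x \<ge> M * E"
      using U1ge x1 x2 by (simp add: S1.U_in S2.U_in)
    moreover have "v1 ts x - v2 ts x \<le> M * E"
      using nonstrict(4)[OF \<epsilon> ts(1) below, of x] x1 x2 by (simp add: S1.V_in S2.V_in E_def mult.assoc)
    moreover have "(d1 * BJ1 * (2 * R) + e) * (M * E) < K * (M * E)" by (rule mult_strict_right_mono[OF K_big(2) ME])
    ultimately show False
    proof -
      assume A: "0 \<le> (d1 * I1 - d1 * u1 ts x - a * u1 ts x + e * v1 ts x) - (d1 * I2 - d1 * u2 ts x - a * u2 ts x + e * v2 ts x)
          - M * \<epsilon> * (exp (K * ts) * K)"
        and B': "I1 \<le> I2 + BJ1 * (M * E) * (2 * R)" and C1: "u1 ts x - u2 ts x \<ge> M * E"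
        and C2: "v1 ts x - v2 ts x \<le> M * E" and C3: "(d1 * BJ1 * (2 * R) + e) * (M * E) < K * (M * E)"
      have "d1 * (I1 - I2) \<le> d1 * (BJ1 * (M * E) * (2 * R))" using B' S1.d1 by (simp add: mult_left_mono)
      moreover have "0 \<le> (d1 + a) * (u1 ts x - u2 ts x)" using C1 ME S1.d1 S1.a by simp
      moreover have "e * (v1 ts x - v2 ts x) \<le> e * (M * E)" using C2 S1.e by (simp add: mult_left_mono)
      moreover have "M * \<epsilon> * (exp (K * ts) * K) = K * (M * E)" by (simp add: E_def algebra_simps)
      moreover have "(d1 * I1 - d1 * u1 ts x - a * u1 ts x + e * v1 ts x) - (d1 * I2 - d1 * u2 ts x - a * u2 ts x + e * v2 ts x)
          = d1 * (I1 - I2) - (d1 + a) * (u1 ts x - u2 ts x) + e * (v1 ts x - v2 ts x)" by (simp add: algebra_simps)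
      moreover have "(d1 * BJ1 * (2 * R) + e) * (M * E) = d1 * (BJ1 * (M * E) * (2 * R)) + e * (M * E)"
        by (simp add: algebra_simps)
      ultimately show False using A C3 by linarith
    qed
  next
    case False
    have "S2.U ts x = 0"
    proof (cases "g2 ts \<le> x \<and> x \<le> h2 ts")
      case True then have "x = g2 ts \<or> x = h2 ts" using False by auto
      then show ?thesis using S2.U_bd[OF ts0(1)] by blast
    next
      case False then show ?thesis by (rule S2.U_out)
    qed
    then have "M * E \<le> S1.U ts x" using U1ge by simp
    moreover have "S1.U ts x < M * (\<epsilon> * exp (K * ts))"
    proof (rule strip[OF \<epsilon> ts hs gs x1 False])
      show "continuous_on {0..} (\<lambda>s. S1.U s x)" by (rule S1.U_cont_t)
      show "S1.U s (g1 s) = 0 \<and> S1.U s (h1 s) = 0" if "s \<ge> 0" for s using S1.U_bd[OF that] by auto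
      fix \<tau> assume "0 < \<tau>" "\<tau> \<le> T" "g1 \<tau> < x" "x < h1 \<tau>"
      then show "\<exists>D. ((\<lambda>s. S1.U s x) has_real_derivative D) (at \<tau>) \<and> D \<le> C"
        using S1.dU Du1_bound by blast
    qed
    ultimately show False by (simp add: E_def)
  qed
qed

lemma no_V_fail:
  assumes \<epsilon>: "\<epsilon> > 0" and ts: "0 < ts" "ts \<le> T" and below: "\<And>s. 0 \<le> s \<Longrightarrow> s < ts \<Longrightarrow> P \<epsilon> s"
    and hs: "h1 ts < h2 ts + \<epsilon> * exp (K * ts)" and gs: "g2 ts - \<epsilon> * exp (K * ts) < g1 ts"
  shows "S1.V ts x < S2.V ts x + M * \<epsilon> * exp (K * ts)"
proof (rule ccontr)
  assume neg: "\<not> S1.V ts x < S2.V ts x + M * \<epsilon> * exp (K * ts)"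
  define E where "E = \<epsilon> * exp (K * ts)"
  have E: "E > 0" using \<epsilon> by (simp add: E_def)
  have ts0: "ts \<ge> 0" "ts \<in> {0..T}" using ts by auto
  have Rb1: "-R \<le> g1 ts" "h1 ts \<le> R" using R1[OF ts0(2)] by auto
  have Rb2: "-R \<le> g2 ts" "h2 ts \<le> R" using R2[OF ts0(2)] by auto
  have ME: "0 < M * E" using M_pos E by simp
  have U1ge: "S2.V ts x + M * E \<le> S1.V ts x" using neg by (simp add: E_def mult.assoc)
  have U2nn: "0 \<le> S2.V ts x" using S2.V_nonneg[OF ts0(1)] .
  have U1pos: "0 < S1.V ts x" using U1ge U2nn ME by linarith
  have x1: "g1 ts < x" "x < h1 ts"
  proof -
    have "g1 ts \<le> x \<and> x \<le> h1 ts" using U1pos S1.V_out by force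
    moreover have "x \<noteq> g1 ts" "x \<noteq> h1 ts" using U1pos S1.V_bd[OF ts0(1)] by auto
    ultimately show "g1 ts < x" "x < h1 ts" by auto
  qed
  show False
  proof (cases "g2 ts < x \<and> x < h2 ts")
    case True
    then have x2: "g2 ts < x" "x < h2 ts" by auto
    define I1 where "I1 = integral {g1 ts..h1 ts} (\<lambda>y. J2 (x - y) * v1 ts y)"
    define I2 where "I2 = integral {g2 ts..h2 ts} (\<lambda>y. J2 (x - y) * v2 ts y)"
    define f where "f s = S1.V s x - S2.V s x - M * \<epsilon> * exp (K * s)" for s
    have D: "(f has_real_derivative
        ((d2 * I1 - d2 * v1 ts x - b * v1 ts x + G (u1 ts x)) - (d2 * I2 - d2 * v2 ts x - b * v2 ts x + G (u2 ts x))
          - M * \<epsilon> * (exp (K * ts) * K))) (at ts)"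
      unfolding f_def I1_def I2_def
      by (rule derivative_eq_intros S1.dV[OF ts(1) x1] S2.dV[OF ts(1) x2] refl | simp)+
    have A: "0 \<le> (d2 * I1 - d2 * v1 ts x - b * v1 ts x + G (u1 ts x)) - (d2 * I2 - d2 * v2 ts x - b * v2 ts x + G (u2 ts x))
          - M * \<epsilon> * (exp (K * ts) * K)"
    proof (rule deriv_touch[OF D])
      show "0 \<le> f ts" using neg by (simp add: f_def)
      show "0 < ts" by (rule ts(1))
      fix s assume "ts - ts < s" "s < ts"
      then have "P \<epsilon> s" using below by auto
      then have "S1.V s x < S2.V s x + M * \<epsilon> * exp (K * s)" unfolding P_def by blast
      then show "f s < 0" by (simp add: f_def)
    qed
    have B': "I1 \<le> I2 + BJ2 * (M * E) * (2 * R)"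
    proof -
      have "I1 = integral {-R..R} (\<lambda>y. J2 (x - y) * S1.V ts y)"
        unfolding I1_def by (rule S1.int_ext(2)[OF Rb1])
      moreover have "I2 = integral {-R..R} (\<lambda>y. J2 (x - y) * S2.V ts y)"
        unfolding I2_def by (rule S2.int_ext(2)[OF Rb2])
      moreover have "integral {-R..R} (\<lambda>y. J2 (x - y) * S1.V ts y)
          \<le> integral {-R..R} (\<lambda>y. J2 (x - y) * S2.V ts y) + BJ2 * (M * E) * (2 * R)"
      proof (rule touch_integral)
        have cJ: "continuous_on {-R..R} (\<lambda>y. J2 (x - y))"
          by (rule continuous_on_compose2[OF J_cont[OF S1.J2]]) (auto intro!: continuous_intros)
        show "continuous_on {-R..R} (\<lambda>y. J2 (x - y) * S1.V ts y)"
          by (intro continuous_intros cJ continuous_on_subset[OF S1.V_cont_x[OF ts0(1)]]) auto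
        show "continuous_on {-R..R} (\<lambda>y. J2 (x - y) * S2.V ts y)"
          by (intro continuous_intros cJ continuous_on_subset[OF S2.V_cont_x[OF ts0(1)]]) auto
        fix y
        have "S1.V ts y \<le> S2.V ts y + M * E" using nonstrict(4)[OF \<epsilon> ts(1) below] by (simp add: E_def mult.assoc)
        then have "J2 (x - y) * S1.V ts y \<le> J2 (x - y) * (S2.V ts y + M * E)"
          using J_nonneg[OF S1.J2] by (simp add: mult_left_mono)
        also have "\<dots> = J2 (x - y) * S2.V ts y + J2 (x - y) * (M * E)" by (simp add: algebra_simps)
        also have "J2 (x - y) * (M * E) \<le> BJ2 * (M * E)" using BJ2 ME by (simp add: mult_right_mono)
        finally show "J2 (x - y) * S1.V ts y \<le> J2 (x - y) * S2.V ts y + BJ2 * (M * E)" by simp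
      qed
      ultimately show ?thesis by simp
    qed
    have C1: "v1 ts x - v2 ts x \<ge> M * E"
      using U1ge x1 x2 by (simp add: S1.V_in S2.V_in)
    have Gd: "G (u1 ts x) - G (u2 ts x) \<le> LG * (M * E)"
    proof -
      have uu: "u1 ts x - u2 ts x \<le> M * E"
        using nonstrict(3)[OF \<epsilon> ts(1) below, of x] x1 x2 by (simp add: S1.U_in S2.U_in E_def mult.assoc)
      have n1: "0 \<le> u1 ts x" "0 \<le> u2 ts x" using S1.uv_nonneg[OF ts0(1)] S2.uv_nonneg[OF ts0(1)] x1 x2 by auto
      have b1: "u1 ts x \<le> B" using B1[OF ts0(2), of x] x1 by (simp add: S1.U_in)
      show ?thesis
      proof (cases "u2 ts x \<le> u1 ts x")
        case True
        have "G (u1 ts x) - G (u2 ts x) \<le> LG * (u1 ts x - u2 ts x)" by (rule LG(2)) (use True n1 b1 in auto)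
        also have "\<dots> \<le> LG * (M * E)" using uu LG(1) by (simp add: mult_left_mono)
        finally show ?thesis .
      next
        case False
        then have "G (u1 ts x) < G (u2 ts x)" using G_props(3)[OF S1.G] n1 by auto
        then show ?thesis using LG(1) ME by (smt (verit) mult_nonneg_nonneg)
      qed
    qed
    have C3: "(d2 * BJ2 * (2 * R) + LG) * (M * E) < K * (M * E)" by (rule mult_strict_right_mono[OF K_big(3) ME])
    have "d2 * (I1 - I2) \<le> d2 * (BJ2 * (M * E) * (2 * R))" using B' S1.d2 by (simp add: mult_left_mono)
    moreover have "0 \<le> (d2 + b) * (v1 ts x - v2 ts x)" using C1 ME S1.d2 S1.b by simp
    moreover have "M * \<epsilon> * (exp (K * ts) * K) = K * (M * E)" by (simp add: E_def algebra_simps)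
    moreover have "(d2 * I1 - d2 * v1 ts x - b * v1 ts x + G (u1 ts x)) - (d2 * I2 - d2 * v2 ts x - b * v2 ts x + G (u2 ts x))
        = d2 * (I1 - I2) - (d2 + b) * (v1 ts x - v2 ts x) + (G (u1 ts x) - G (u2 ts x))" by (simp add: algebra_simps)
    moreover have "(d2 * BJ2 * (2 * R) + LG) * (M * E) = d2 * (BJ2 * (M * E) * (2 * R)) + LG * (M * E)"
      by (simp add: algebra_simps)
    ultimately show False using A C3 Gd by linarith
  next
    case False
    have "S2.V ts x = 0"
    proof (cases "g2 ts \<le> x \<and> x \<le> h2 ts")
      case True then have "x = g2 ts \<or> x = h2 ts" using False by auto
      then show ?thesis using S2.V_bd[OF ts0(1)] by blast
    next
      case False then show ?thesis by (rule S2.V_out)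
    qed
    then have "M * E \<le> S1.V ts x" using U1ge by simp
    moreover have "S1.V ts x < M * (\<epsilon> * exp (K * ts))"
    proof (rule strip[OF \<epsilon> ts hs gs x1 False])
      show "continuous_on {0..} (\<lambda>s. S1.V s x)" by (rule S1.V_cont_t)
      show "S1.V s (g1 s) = 0 \<and> S1.V s (h1 s) = 0" if "s \<ge> 0" for s using S1.V_bd[OF that] by auto
      fix \<tau> assume "0 < \<tau>" "\<tau> \<le> T" "g1 \<tau> < x" "x < h1 \<tau>"
      then show "\<exists>D. ((\<lambda>s. S1.V s x) has_real_derivative D) (at \<tau>) \<and> D \<le> C"
        using S1.dV Dv1_bound by blast
    qed
    ultimately show False by (simp add: E_def)
  qed
qed


lemma all_P:
  assumes \<epsilon>: "\<epsilon> > 0"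
  shows "\<forall>t\<in>{0..T}. P \<epsilon> t"
proof (rule ccontr)
  assume "\<not> (\<forall>t\<in>{0..T}. P \<epsilon> t)"
  define Fs where "Fs = {t \<in> {0..T}. \<not> P \<epsilon> t}"
  have ne: "Fs \<noteq> {}" using \<open>\<not> (\<forall>t\<in>{0..T}. P \<epsilon> t)\<close> by (auto simp: Fs_def)
  have bb: "bdd_below Fs" by (rule bdd_belowI[of _ 0]) (auto simp: Fs_def)
  have cl: "closed Fs" unfolding Fs_def by (rule fail_closed[OF \<epsilon>])
  define ts where "ts = Inf Fs"
  have tsF: "ts \<in> Fs" unfolding ts_def by (rule closed_contains_Inf[OF ne bb cl])
  then have ts: "0 \<le> ts" "ts \<le> T" "\<not> P \<epsilon> ts" by (auto simp: Fs_def)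
  have "ts \<noteq> 0" using ts(3) P0[OF \<epsilon>] by auto
  then have ts0: "0 < ts" using ts by auto
  have below: "P \<epsilon> s" if "0 \<le> s" "s < ts" for s
  proof (rule ccontr)
    assume "\<not> P \<epsilon> s"
    then have "s \<in> Fs" using that ts by (auto simp: Fs_def)
    then have "ts \<le> s" unfolding ts_def by (rule cInf_lower[OF _ bb])
    then show False using that by simp
  qed
  have hs: "h1 ts < h2 ts + \<epsilon> * exp (K * ts)" by (rule no_h_fail[OF \<epsilon> ts0 ts(2) below])
  have gs: "g2 ts - \<epsilon> * exp (K * ts) < g1 ts" by (rule no_g_fail[OF \<epsilon> ts0 ts(2) below])
  have "S1.U ts x < S2.U ts x + M * \<epsilon> * exp (K * ts)" for x by (rule no_U_fail[OF \<epsilon> ts0 ts(2) below hs gs])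
  moreover have "S1.V ts x < S2.V ts x + M * \<epsilon> * exp (K * ts)" for x by (rule no_V_fail[OF \<epsilon> ts0 ts(2) below hs gs])
  ultimately have "P \<epsilon> ts" using hs gs by (simp add: P_def)
  then show False using ts(3) by simp
qed

lemma final:
  assumes t: "0 < t" "t \<le> T"
  shows "h1 t \<le> h2 t \<and> g2 t \<le> g1 t \<and> (\<forall>x. g1 t < x \<and> x < h1 t \<longrightarrow> u1 t x \<le> u2 t x \<and> v1 t x \<le> v2 t x)"
proof -
  have tT: "t \<in> {0..T}" using t by auto
  have Pe: "P \<epsilon> t" if "\<epsilon> > 0" for \<epsilon> using all_P[OF that] tT by blast
  define X where "X = exp (K * t)"
  have X: "X > 0" by (simp add: X_def)
  have lim: "a1 \<le> a2" if "\<And>\<epsilon>. \<epsilon> > 0 \<Longrightarrow> a1 < a2 + c * \<epsilon> * X" and c: "c > 0" for a1 a2 c :: real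
  proof (rule ccontr)
    assume "\<not> a1 \<le> a2"
    define \<epsilon> where "\<epsilon> = (a1 - a2) / (c * X)"
    have "\<epsilon> > 0" using \<open>\<not> a1 \<le> a2\<close> c X by (simp add: \<epsilon>_def)
    moreover have "c * \<epsilon> * X = a1 - a2" using c X by (simp add: \<epsilon>_def)
    ultimately show False using that(1)[of \<epsilon>] by simp
  qed
  have h: "h1 t \<le> h2 t" by (rule lim[of _ _ 1]) (use Pe in \<open>auto simp: P_def X_def\<close>)
  have g: "g2 t \<le> g1 t"
  proof -
    have "- g1 t \<le> - g2 t"
    proof (rule lim[of _ _ 1])
      fix \<epsilon> :: real assume "\<epsilon> > 0"
      then have "g2 t - \<epsilon> * exp (K * t) < g1 t" using Pe[of \<epsilon>] by (simp add: P_def)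
      then show "- g1 t < - g2 t + 1 * \<epsilon> * X" by (simp add: X_def)
    qed simp
    then show ?thesis by simp
  qed
  have uv: "u1 t x \<le> u2 t x \<and> v1 t x \<le> v2 t x" if x: "g1 t < x" "x < h1 t" for x
  proof -
    have in2: "g2 t \<le> x" "x \<le> h2 t" using g h x by auto
    have "S1.U t x \<le> S2.U t x" by (rule lim[of _ _ M]) (use Pe M_pos in \<open>auto simp: P_def X_def\<close>)
    moreover have "S1.V t x \<le> S2.V t x" by (rule lim[of _ _ M]) (use Pe M_pos in \<open>auto simp: P_def X_def\<close>)
    ultimately show ?thesis using x in2 by (simp add: S1.U_in S1.V_in S2.U_in S2.V_in)
  qed
  show ?thesis using h g uv by blast
qed
end


theorem corollary2p9:
  fixes d1 d2 a b e \<rho> h0 \<mu>1 \<mu>2 :: real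
    and J1 J2 W G u0 v0 g1 h1 g2 h2 :: "real \<Rightarrow> real"
    and u1 v1 u2 v2 :: "real \<Rightarrow> real \<Rightarrow> real"
  assumes "d1 > 0" "d2 > 0" "a > 0" "b > 0" "e > 0" "\<rho> > 0" "h0 > 0"
    and "cond_J J1" "cond_J J2" "cond_W W" "cond_G1 G" "cond_G2 a b e G"
    and "cond_IC h0 u0 v0"
    and "0 < \<mu>1" "\<mu>1 \<le> \<mu>2"
    and "sol_P d1 d2 a b e \<rho> \<mu>1 J1 J2 W G h0 u0 v0 u1 v1 g1 h1"
    and "sol_P d1 d2 a b e \<rho> \<mu>2 J1 J2 W G h0 u0 v0 u2 v2 g2 h2"
  shows "\<forall>t>0. h1 t \<le> h2 t \<and> g2 t \<le> g1 t \<and>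
           (\<forall>x. g1 t < x \<and> x < h1 t \<longrightarrow> u1 t x \<le> u2 t x \<and> v1 t x \<le> v2 t x)"
proof (intro allI impI)
  fix t :: real assume t: "t > 0"
  interpret S1: solP d1 d2 a b e \<rho> \<mu>1 h0 J1 J2 W G u0 v0 g1 h1 u1 v1
    by unfold_locales (use assms in auto)
  interpret S2: solP d1 d2 a b e \<rho> \<mu>2 h0 J1 J2 W G u0 v0 g2 h2 u2 v2
    by unfold_locales (use assms in auto)
  define T where "T = t"
  have T: "T > 0" "T \<ge> 0" using t by (auto simp: T_def)
  obtain R1 where R1: "R1 > 0" "\<And>t. t \<in> {0..T} \<Longrightarrow> - R1 \<le> g1 t \<and> h1 t \<le> R1 \<and> -R1 \<le> h1 t \<and> g1 t \<le> R1"
    using S1.dom_bound[OF T(2)] by blast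
  obtain R2 where R2: "R2 > 0" "\<And>t. t \<in> {0..T} \<Longrightarrow> - R2 \<le> g2 t \<and> h2 t \<le> R2 \<and> -R2 \<le> h2 t \<and> g2 t \<le> R2"
    using S2.dom_bound[OF T(2)] by blast
  define R where "R = R1 + R2"
  obtain B1 where B1: "B1 > 0" "\<And>t x. t \<in> {0..T} \<Longrightarrow> S1.U t x \<le> B1 \<and> S1.V t x \<le> B1"
    using S1.UV_bound[OF T(2)] by blast
  obtain B2 where B2: "B2 > 0" "\<And>t x. t \<in> {0..T} \<Longrightarrow> S2.U t x \<le> B2 \<and> S2.V t x \<le> B2"
    using S2.UV_bound[OF T(2)] by blast
  define B where "B = B1 + B2"
  obtain BJ1 where BJ1: "BJ1 > 0" "\<And>x. J1 x \<le> BJ1" using J_bound[OF S1.J1] by blast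
  obtain BJ2 where BJ2: "BJ2 > 0" "\<And>x. J2 x \<le> BJ2" using J_bound[OF S1.J2] by blast
  obtain BW where BW: "BW \<ge> 0" "\<And>y. Wc W y \<le> BW" using W_bound[OF S1.W] by blast
  have R0: "2 * R \<ge> 0" using R1 R2 by (simp add: R_def)
  obtain LW where LW: "LW \<ge> 0" "\<And>p q. p \<in> {0..2*R} \<Longrightarrow> q \<in> {0..2*R} \<Longrightarrow> \<bar>W p - W q\<bar> \<le> LW * \<bar>p - q\<bar>"
    using W_lip[OF S1.W R0] by blast
  have B0: "B \<ge> 0" using B1 B2 by (simp add: B_def)
  obtain LG where LG: "LG \<ge> 0" "\<And>p q. 0 \<le> q \<Longrightarrow> q \<le> p \<Longrightarrow> p \<le> B \<Longrightarrow> G p - G q \<le> LG * (p - q)"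
    using G_lip[OF S1.G B0] by blast
  obtain \<delta> where \<delta>: "\<delta> > 0" "\<And>s t. 0 \<le> s \<Longrightarrow> s \<le> t \<Longrightarrow> t \<le> T \<Longrightarrow> \<delta> * (t - s) \<le> h1 t - h1 s"
       "\<And>s t. 0 \<le> s \<Longrightarrow> s \<le> t \<Longrightarrow> t \<le> T \<Longrightarrow> \<delta> * (t - s) \<le> g1 s - g1 t"
    using S1.speed[OF T(2)] by blast
  interpret TT: two_T d1 d2 a b e \<rho> \<mu>1 \<mu>2 h0 J1 J2 W G u0 v0 g1 h1 g2 h2 u1 v1 u2 v2 T R B BJ1 BJ2 BW LW LG \<delta>
  proof unfold_locales
    show "\<mu>1 \<le> \<mu>2" by (rule assms(15))
    show "T > 0" by (rule T(1))
    show "R > 0" using R1 R2 by (simp add: R_def)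
    show "- R \<le> g1 s \<and> h1 s \<le> R" if "s \<in> {0..T}" for s using R1(2)[OF that] R2(1) by (simp add: R_def)
    show "- R \<le> g2 s \<and> h2 s \<le> R" if "s \<in> {0..T}" for s using R2(2)[OF that] R1(1) by (simp add: R_def)
    show "B > 0" using B1 B2 by (simp add: B_def)
    show "S1.U s x \<le> B \<and> S1.V s x \<le> B" if "s \<in> {0..T}" for s x using B1(2)[OF that, of x] B2(1) by (simp add: B_def)
    show "S2.U s x \<le> B \<and> S2.V s x \<le> B" if "s \<in> {0..T}" for s x using B2(2)[OF that, of x] B1(1) by (simp add: B_def)
  qed (use BJ1 BJ2 BW LW LG \<delta> in auto)
  show "h1 t \<le> h2 t \<and> g2 t \<le> g1 t \<and> (\<forall>x. g1 t < x \<and> x < h1 t \<longrightarrow> u1 t x \<le> u2 t x \<and> v1 t x \<le> v2 t x)"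
    using TT.final[of t] t by (simp add: T_def)
qed



end
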